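(* Let $G$ be a finite solvable group with $G\in\mathcal{D}_n$ for some integer $n\ge 3$. Then the derived length of $G$ is at most $n-1$.
   Context: $\mathcal{D}(G)$ denotes the number of conjugacy classes of nontrivial subgroups $H$ of the finite group $G$ with $N_G(H)\neq H$; $\mathcal{D}_n$ is the family of finite groups $G$ with $\mathcal{D}(G)=n$. *)

theory Defs
  imports "HOL-Algebra.Group_Action" "HOL-Algebra.Solvable_Groups"
begin

definition subgroup_conj_class :: "('a, 'b) monoid_scheme \<Rightarrow> 'a set \<Rightarrow> 'a set set" where
  "subgroup_conj_class G H = {g <#\<^bsub>G\<^esub> H #>\<^bsub>G\<^esub> inv\<^bsub>G\<^esub> g | g. g \<in> carrier G}"

definition D_count :: "('a, 'b) monoid_scheme \<Rightarrow> nat" where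
  "D_count G = card {subgroup_conj_class G H | H.
       subgroup H G \<and> H \<noteq> {\<one>\<^bsub>G\<^esub>} \<and> normalizer G H \<noteq> H}"

definition derived_length :: "('a, 'b) monoid_scheme \<Rightarrow> nat" where
  "derived_length G = (LEAST n. (derived G ^^ n) (carrier G) = {\<one>\<^bsub>G\<^esub>})"

end

theory Submission
  imports Defs "HOL-Algebra.Multiplicative_Group" "HOL-Algebra.SndIsomorphismGrp"
begin

context group begin

lemma inv_cancel_l [simp]: "g \<in> carrier G \<Longrightarrow> n \<in> carrier G \<Longrightarrow> g \<otimes> (inv g \<otimes> n) = n"
  by (simp add: m_assoc[symmetric])
lemma inv_cancel_l2 [simp]: "g \<in> carrier G \<Longrightarrow> n \<in> carrier G \<Longrightarrow> inv g \<otimes> (g \<otimes> n) = n"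
  by (simp add: m_assoc[symmetric])

lemma conj_set_eq:
  assumes "x \<in> carrier G" "H \<subseteq> carrier G"
  shows "x <# H #> inv x = (\<lambda>h. x \<otimes> h \<otimes> inv x) ` H"
  using assms unfolding l_coset_def r_coset_def by auto

lemma normalizer_iff:
  assumes "H \<subseteq> carrier G"
  shows "x \<in> normalizer G H \<longleftrightarrow> x \<in> carrier G \<and> x <# H #> inv x = H"
  using assms unfolding normalizer_def stabilizer_def by auto

lemma conj_one: "H \<subseteq> carrier G \<Longrightarrow> \<one> <# H #> inv \<one> = H"
proof -
  assume h: "H \<subseteq> carrier G"
  have "(\<lambda>x. \<one> \<otimes> x \<otimes> \<one>) ` H = (\<lambda>x. x) ` H" by (rule image_cong) (use h in auto)
  thus ?thesis using conj_set_eq[of \<one> H] h by simp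
qed

lemma in_conj_class: "H \<subseteq> carrier G \<Longrightarrow> H \<in> subgroup_conj_class G H"
  unfolding subgroup_conj_class_def using conj_one by (metis (mono_tags, lifting) mem_Collect_eq one_closed)

lemma normal_conj_eq:
  assumes "N \<lhd> G" "g \<in> carrier G"
  shows "g <# N #> inv g = N"
proof -
  have sub: "N \<subseteq> carrier G" using assms normal_imp_subgroup subgroup.subset by blast
  have cl: "\<And>x h. x \<in> carrier G \<Longrightarrow> h \<in> N \<Longrightarrow> x \<otimes> h \<otimes> inv x \<in> N"
    using assms(1) normal_inv_iff by blast
  show ?thesis
  proof
    show "g <# N #> inv g \<subseteq> N" using conj_set_eq[OF assms(2) sub] cl assms(2) by auto
    show "N \<subseteq> g <# N #> inv g"
    proof
      fix n assume n: "n \<in> N"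
      have nc: "n \<in> carrier G" using n sub by auto
      have "inv g \<otimes> n \<otimes> inv (inv g) \<in> N" using cl[of "inv g" n] n assms(2) by auto
      moreover have "n = g \<otimes> (inv g \<otimes> n \<otimes> inv (inv g)) \<otimes> inv g"
        using nc assms(2) by (simp add: m_assoc)
      ultimately show "n \<in> g <# N #> inv g" using conj_set_eq[OF assms(2) sub] by auto
    qed
  qed
qed

lemma normal_conj_class:
  assumes "N \<lhd> G" shows "subgroup_conj_class G N = {N}"
  unfolding subgroup_conj_class_def using normal_conj_eq[OF assms] by auto

lemma conj_class_eq_imp:
  assumes "subgroup_conj_class G H1 = subgroup_conj_class G H2" "H1 \<subseteq> carrier G"
  shows "\<exists>g\<in>carrier G. H1 = g <# H2 #> inv g"
  using in_conj_class[OF assms(2)] assms(1) unfolding subgroup_conj_class_def by auto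

lemma conj_card:
  assumes "g \<in> carrier G" "H \<subseteq> carrier G"
  shows "card (g <# H #> inv g) = card H"
proof -
  have "inj_on (\<lambda>h. g \<otimes> h \<otimes> inv g) H"
    using assms by (auto intro!: inj_onI simp: subset_iff)
  thus ?thesis using conj_set_eq[OF assms] card_image by metis
qed

lemma conj_sub_normal:
  assumes "g \<in> carrier G" "H \<subseteq> N" "N \<lhd> G"
  shows "g <# H #> inv g \<subseteq> N"
proof -
  have "N \<subseteq> carrier G" using assms normal_imp_subgroup subgroup.subset by blast
  hence "H \<subseteq> carrier G" using assms by auto
  thus ?thesis using conj_set_eq[OF assms(1)] assms normal_inv_iff by auto
qed

lemma conj_sup_normal:
  assumes "g \<in> carrier G" "N \<subseteq> H" "N \<lhd> G" "H \<subseteq> carrier G"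
  shows "N \<subseteq> g <# H #> inv g"
proof -
  have "N = g <# N #> inv g" using normal_conj_eq assms by auto
  also have "... \<subseteq> g <# H #> inv g" using assms unfolding l_coset_def r_coset_def by auto
  finally show ?thesis .
qed


definition cnt :: "'a set \<Rightarrow> bool" where
  "cnt H \<longleftrightarrow> subgroup H G \<and> H \<noteq> {\<one>} \<and> normalizer G H \<noteq> H"

lemma count_lemma:
  assumes fin: "finite (carrier G)"
    and cntS: "\<And>H. H \<in> S \<Longrightarrow> cnt H \<and> H \<lhd> G"
    and finS: "finite S"
    and c1: "cnt E1" and c2: "cnt E2" and n1: "E1 \<notin> S" and n2: "E2 \<notin> S"
    and cc: "subgroup_conj_class G E1 \<noteq> subgroup_conj_class G E2"
  shows "card S + 2 \<le> D_count G"
proof -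
  let ?C = "{subgroup_conj_class G H | H. subgroup H G \<and> H \<noteq> {\<one>} \<and> normalizer G H \<noteq> H}"
  let ?T = "S \<union> {E1, E2}"
  have sub: "subgroup_conj_class G ` ?T \<subseteq> ?C"
  proof
    fix X assume "X \<in> subgroup_conj_class G ` ?T"
    then obtain H where H: "H \<in> ?T" "X = subgroup_conj_class G H" by blast
    have "cnt H" using H(1) cntS c1 c2 by auto
    thus "X \<in> ?C" unfolding cnt_def H(2) by blast
  qed
  have finC: "finite ?C"
  proof (rule finite_subset)
    show "?C \<subseteq> Pow (Pow (carrier G))"
    proof
      fix X assume "X \<in> ?C"
      then obtain H where H: "X = subgroup_conj_class G H" "subgroup H G" by auto
      have hc: "H \<subseteq> carrier G" using H(2) subgroup.subset by blast
      have "\<And>Y. Y \<in> X \<Longrightarrow> Y \<subseteq> carrier G"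
      proof -
        fix Y assume "Y \<in> X"
        then obtain g where g: "g \<in> carrier G" "Y = g <# H #> inv g"
          unfolding H(1) subgroup_conj_class_def by auto
        show "Y \<subseteq> carrier G" unfolding g(2) conj_set_eq[OF g(1) hc] using g(1) hc by auto
      qed
      thus "X \<in> Pow (Pow (carrier G))" by auto
    qed
    show "finite (Pow (Pow (carrier G)))" using fin by simp
  qed
  have carr: "\<And>H. H \<in> ?T \<Longrightarrow> H \<subseteq> carrier G"
  proof -
    fix H assume "H \<in> ?T"
    hence "subgroup H G" using cntS c1 c2 unfolding cnt_def by auto
    thus "H \<subseteq> carrier G" using subgroup.subset by blast
  qed
  have inj: "inj_on (subgroup_conj_class G) ?T"
  proof (rule inj_onI)
    fix X Y assume X: "X \<in> ?T" and Y: "Y \<in> ?T" and eq: "subgroup_conj_class G X = subgroup_conj_class G Y"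
    have xin: "X \<in> subgroup_conj_class G Y" using eq in_conj_class carr[OF X] by auto
    have yin: "Y \<in> subgroup_conj_class G X" using eq in_conj_class carr[OF Y] by auto
    show "X = Y"
    proof (cases "X \<in> S")
      case True
      hence "subgroup_conj_class G X = {X}" using normal_conj_class cntS by blast
      thus ?thesis using yin by simp
    next
      case False note XS = this
      show ?thesis
      proof (cases "Y \<in> S")
        case True
        hence "subgroup_conj_class G Y = {Y}" using normal_conj_class cntS by blast
        thus ?thesis using xin by simp
      next
        case False
        hence "X \<in> {E1,E2}" "Y \<in> {E1,E2}" using XS X Y by auto
        thus ?thesis using eq cc by auto
      qed
    qed
  qed
  have "E1 \<noteq> E2" using cc by auto
  hence "card ?T = card S + 2" using n1 n2 finS by (simp add: card_insert_if)
  hence "card (subgroup_conj_class G ` ?T) = card S + 2" using card_image[OF inj] by simp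
  moreover have "card (subgroup_conj_class G ` ?T) \<le> card ?C" using card_mono[OF finC sub] .
  ultimately show ?thesis unfolding D_count_def by simp
qed

end

context group begin

definition cent :: "'a set \<Rightarrow> 'a set" where
  "cent S = {z \<in> carrier G. \<forall>s\<in>S. s \<otimes> z = z \<otimes> s}"

lemma cent_subgroup: assumes "S \<subseteq> carrier G" shows "subgroup (cent S) G"
proof (rule subgroupI)
  show "cent S \<subseteq> carrier G" unfolding cent_def by auto
  show "cent S \<noteq> {}" using assms unfolding cent_def by (auto intro!: exI[of _ \<one>])
next
  fix z assume z: "z \<in> cent S"
  hence zc: "z \<in> carrier G" unfolding cent_def by auto
  have "\<And>s. s \<in> S \<Longrightarrow> s \<otimes> inv z = inv z \<otimes> s"
  proof -
    fix s assume s: "s \<in> S"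
    hence sc: "s \<in> carrier G" using assms by auto
    have e: "s \<otimes> z = z \<otimes> s" using z s unfolding cent_def by auto
    have "inv z \<otimes> (s \<otimes> z) \<otimes> inv z = inv z \<otimes> (z \<otimes> s) \<otimes> inv z" using e by simp
    thus "s \<otimes> inv z = inv z \<otimes> s" using sc zc by (simp add: m_assoc)
  qed
  thus "inv z \<in> cent S" using zc unfolding cent_def by auto
next
  fix z w assume z: "z \<in> cent S" and w: "w \<in> cent S"
  hence zc: "z \<in> carrier G" and wc: "w \<in> carrier G" unfolding cent_def by auto
  have "\<And>s. s \<in> S \<Longrightarrow> s \<otimes> (z \<otimes> w) = (z \<otimes> w) \<otimes> s"
  proof -
    fix s assume s: "s \<in> S"
    hence sc: "s \<in> carrier G" using assms by auto
    have "s \<otimes> (z \<otimes> w) = (s \<otimes> z) \<otimes> w" using sc zc wc by (simp add: m_assoc)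
    also have "... = z \<otimes> (s \<otimes> w)" using z s sc zc wc unfolding cent_def by (simp add: m_assoc)
    also have "... = z \<otimes> (w \<otimes> s)" using w s unfolding cent_def by auto
    finally show "s \<otimes> (z \<otimes> w) = (z \<otimes> w) \<otimes> s" using sc zc wc by (simp add: m_assoc)
  qed
  thus "z \<otimes> w \<in> cent S" using zc wc unfolding cent_def by auto
qed

lemma gen_in_cent:
  assumes "S \<subseteq> carrier G" "T \<subseteq> cent S"
  shows "generate G T \<subseteq> cent S"
  using generate_subgroup_incl[OF assms(2) cent_subgroup[OF assms(1)]] .

lemma commute_gen:
  assumes "x \<in> carrier G" "T \<subseteq> carrier G" "\<And>t. t \<in> T \<Longrightarrow> x \<otimes> t = t \<otimes> x" "z \<in> generate G T"
  shows "x \<otimes> z = z \<otimes> x"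
proof -
  have "T \<subseteq> cent {x}" using assms unfolding cent_def by auto
  hence "z \<in> cent {x}" using gen_in_cent[of "{x}" T] assms by auto
  thus ?thesis unfolding cent_def by auto
qed

lemma norm_by_commute:
  assumes "g \<in> carrier G" "E \<subseteq> carrier G" "\<And>h. h \<in> E \<Longrightarrow> g \<otimes> h = h \<otimes> g"
  shows "g \<in> normalizer G E"
proof -
  have "(\<lambda>h. g \<otimes> h \<otimes> inv g) ` E = (\<lambda>h. h) ` E"
  proof (rule image_cong)
    fix h assume h: "h \<in> E"
    hence hc: "h \<in> carrier G" using assms by auto
    have "g \<otimes> h \<otimes> inv g = h \<otimes> g \<otimes> inv g" using assms(3)[OF h] by simp
    thus "g \<otimes> h \<otimes> inv g = h" using hc assms(1) by (simp add: m_assoc)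
  qed simp
  thus ?thesis using normalizer_iff[OF assms(2)] conj_set_eq[OF assms(1,2)] assms(1) by simp
qed

lemma comm_in_derived:
  assumes "x \<in> A" "y \<in> A"
  shows "x \<otimes> y \<otimes> inv x \<otimes> inv y \<in> derived G A"
proof -
  have "x \<otimes> y \<otimes> inv x \<otimes> inv y \<in> derived_set G A" using assms by blast
  thus ?thesis unfolding derived_def by (rule generate.incl)
qed

lemma norm_der:
  assumes A: "subgroup A G" and E: "subgroup E G" and dA: "derived G A \<subseteq> E" and EA: "E \<subseteq> A"
  shows "A \<subseteq> normalizer G E"
proof
  fix l assume l: "l \<in> A"
  have lc: "l \<in> carrier G" using subgroup.subset[OF A] l by auto
  have Ec: "E \<subseteq> carrier G" using subgroup.subset[OF E] .
  have key: "\<And>l h. l \<in> A \<Longrightarrow> h \<in> E \<Longrightarrow> l \<otimes> h \<otimes> inv l \<in> E"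
  proof -
    fix l h assume l: "l \<in> A" and h: "h \<in> E"
    have lc: "l \<in> carrier G" using subgroup.subset[OF A] l by auto
    have hc: "h \<in> carrier G" using h Ec by auto
    have hA: "h \<in> A" using h EA by auto
    have "l \<otimes> h \<otimes> inv l \<otimes> inv h \<in> derived G A"
      using comm_in_derived[OF l hA] .
    hence "l \<otimes> h \<otimes> inv l \<otimes> inv h \<in> E" by (rule subsetD[OF dA])
    hence "(l \<otimes> h \<otimes> inv l \<otimes> inv h) \<otimes> h \<in> E" by (rule subgroup.m_closed[OF E _ h])
    thus "l \<otimes> h \<otimes> inv l \<in> E" using lc hc by (simp add: m_assoc)
  qed
  have "(\<lambda>h. l \<otimes> h \<otimes> inv l) ` E = E"
  proof
    show "(\<lambda>h. l \<otimes> h \<otimes> inv l) ` E \<subseteq> E" using key l by auto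
    show "E \<subseteq> (\<lambda>h. l \<otimes> h \<otimes> inv l) ` E"
    proof
      fix h assume h: "h \<in> E"
      have hc: "h \<in> carrier G" using h Ec by auto
      have il: "inv l \<in> A" by (rule subgroup.m_inv_closed[OF A l])
      have "inv l \<otimes> h \<otimes> inv (inv l) \<in> E" using key[OF il h] .
      moreover have "h = l \<otimes> (inv l \<otimes> h \<otimes> inv (inv l)) \<otimes> inv l" using lc hc by (simp add: m_assoc)
      ultimately show "h \<in> (\<lambda>h. l \<otimes> h \<otimes> inv l) ` E" by blast
    qed
  qed
  thus "l \<in> normalizer G E" using normalizer_iff[OF Ec] conj_set_eq[OF lc Ec] lc by simp
qed

lemma cnt_intro:
  assumes "subgroup E G" "x \<in> E" "x \<noteq> \<one>" "g \<in> normalizer G E" "g \<notin> E"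
  shows "cnt E"
  using assms unfolding cnt_def by auto

lemma class_diff_sup:
  assumes "N \<lhd> G" "N \<subseteq> E1" "\<not> N \<subseteq> E2" "E2 \<subseteq> carrier G" "E1 \<subseteq> carrier G"
  shows "subgroup_conj_class G E1 \<noteq> subgroup_conj_class G E2"
proof
  assume "subgroup_conj_class G E1 = subgroup_conj_class G E2"
  then obtain g where g: "g \<in> carrier G" "E2 = g <# E1 #> inv g" using conj_class_eq_imp assms by metis
  thus False using conj_sup_normal[OF g(1) assms(2,1,5)] assms(3) by simp
qed

lemma class_diff_sub:
  assumes "N \<lhd> G" "E1 \<subseteq> N" "\<not> E2 \<subseteq> N" "E2 \<subseteq> carrier G"
  shows "subgroup_conj_class G E1 \<noteq> subgroup_conj_class G E2"
proof
  assume "subgroup_conj_class G E1 = subgroup_conj_class G E2"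
  then obtain g where g: "g \<in> carrier G" "E2 = g <# E1 #> inv g" using conj_class_eq_imp assms by metis
  thus False using conj_sub_normal[OF g(1) assms(2,1)] assms(3) by simp
qed

lemma class_diff_card:
  assumes "card E1 \<noteq> card E2" "E2 \<subseteq> carrier G" "E1 \<subseteq> carrier G"
  shows "subgroup_conj_class G E1 \<noteq> subgroup_conj_class G E2"
proof
  assume "subgroup_conj_class G E1 = subgroup_conj_class G E2"
  then obtain g where g: "g \<in> carrier G" "E2 = g <# E1 #> inv g" using conj_class_eq_imp assms by metis
  thus False using conj_card[OF g(1) assms(3)] assms(1) by simp
qed

end

context group begin

lemma comm_one_iff:
  assumes "x \<in> carrier G" "y \<in> carrier G"
  shows "x \<otimes> y \<otimes> inv x \<otimes> inv y = \<one> \<longleftrightarrow> x \<otimes> y = y \<otimes> x"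
proof
  assume h: "x \<otimes> y \<otimes> inv x \<otimes> inv y = \<one>"
  have "x \<otimes> y = (x \<otimes> y \<otimes> inv x \<otimes> inv y) \<otimes> (y \<otimes> x)" using assms by (simp add: m_assoc)
  thus "x \<otimes> y = y \<otimes> x" using h assms by simp
next
  assume h: "x \<otimes> y = y \<otimes> x"
  have "x \<otimes> y \<otimes> inv x \<otimes> inv y = y \<otimes> x \<otimes> inv x \<otimes> inv y" using h by simp
  thus "x \<otimes> y \<otimes> inv x \<otimes> inv y = \<one>" using assms by (simp add: m_assoc)
qed

lemma derived_gen_sub:
  assumes A: "A \<subseteq> carrier G" and S: "subgroup S G"
    and nS: "\<And>x s. x \<in> A \<Longrightarrow> s \<in> S \<Longrightarrow> x \<otimes> s \<otimes> inv x \<in> S \<and> inv x \<otimes> s \<otimes> x \<in> S"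
    and cS: "\<And>x y. x \<in> A \<Longrightarrow> y \<in> A \<Longrightarrow> x \<otimes> y \<otimes> inv x \<otimes> inv y \<in> S"
  shows "derived G (generate G A) \<subseteq> S"
proof -
  have Sc: "S \<subseteq> carrier G" using subgroup.subset[OF S] .
  define N where "N = {x \<in> carrier G. \<forall>s\<in>S. x \<otimes> s \<otimes> inv x \<in> S \<and> inv x \<otimes> s \<otimes> x \<in> S}"
  have sN: "subgroup N G"
  proof (rule subgroupI)
    show "N \<subseteq> carrier G" unfolding N_def by auto
    have "\<one> \<in> N" unfolding N_def using Sc by auto
    thus "N \<noteq> {}" by auto
  next
    fix x assume x: "x \<in> N"
    hence xc: "x \<in> carrier G" unfolding N_def by auto
    show "inv x \<in> N" using x xc unfolding N_def by auto
  next
    fix x y assume x: "x \<in> N" and y: "y \<in> N"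
    hence xc: "x \<in> carrier G" and yc: "y \<in> carrier G" unfolding N_def by auto
    have "\<forall>s\<in>S. x \<otimes> y \<otimes> s \<otimes> inv (x \<otimes> y) \<in> S \<and> inv (x \<otimes> y) \<otimes> s \<otimes> (x \<otimes> y) \<in> S"
    proof
      fix s assume s: "s \<in> S"
      hence sc: "s \<in> carrier G" using Sc by auto
      have s1: "y \<otimes> s \<otimes> inv y \<in> S" using y s unfolding N_def by auto
      have s2: "inv x \<otimes> s \<otimes> x \<in> S" using x s unfolding N_def by auto
      have "x \<otimes> (y \<otimes> s \<otimes> inv y) \<otimes> inv x \<in> S" using x s1 unfolding N_def by auto
      moreover have "x \<otimes> y \<otimes> s \<otimes> inv (x \<otimes> y) = x \<otimes> (y \<otimes> s \<otimes> inv y) \<otimes> inv x"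
        using xc yc sc by (simp add: m_assoc inv_mult_group)
      moreover have "inv y \<otimes> (inv x \<otimes> s \<otimes> x) \<otimes> y \<in> S" using y s2 unfolding N_def by auto
      moreover have "inv (x \<otimes> y) \<otimes> s \<otimes> (x \<otimes> y) = inv y \<otimes> (inv x \<otimes> s \<otimes> x) \<otimes> y"
        using xc yc sc by (simp add: m_assoc inv_mult_group)
      ultimately show "x \<otimes> y \<otimes> s \<otimes> inv (x \<otimes> y) \<in> S \<and> inv (x \<otimes> y) \<otimes> s \<otimes> (x \<otimes> y) \<in> S" by simp
    qed
    thus "x \<otimes> y \<in> N" using xc yc unfolding N_def by auto
  qed
  have AN: "A \<subseteq> N" using A nS unfolding N_def by auto
  have gN: "generate G A \<subseteq> N" using generate_subgroup_incl[OF AN sN] .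
  define Y where "Y a = {y \<in> N. a \<otimes> y \<otimes> inv a \<otimes> inv y \<in> S}" for a
  have sY: "subgroup (Y a) G" if a: "a \<in> A" for a
  proof (rule subgroupI)
    have ac: "a \<in> carrier G" using a A by auto
    show "Y a \<subseteq> carrier G" unfolding Y_def N_def by auto
    have "\<one> \<in> Y a" unfolding Y_def using ac subgroup.one_closed[OF sN] subgroup.one_closed[OF S] by simp
    thus "Y a \<noteq> {}" by auto
  next
    fix y assume y: "y \<in> Y a"
    have ac: "a \<in> carrier G" using a A by auto
    have yN: "y \<in> N" using y unfolding Y_def by auto
    hence yc: "y \<in> carrier G" unfolding N_def by auto
    have c: "a \<otimes> y \<otimes> inv a \<otimes> inv y \<in> S" using y unfolding Y_def by auto
    have ic: "inv (a \<otimes> y \<otimes> inv a \<otimes> inv y) \<in> S" using subgroup.m_inv_closed[OF S c] .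
    have "inv y \<otimes> inv (a \<otimes> y \<otimes> inv a \<otimes> inv y) \<otimes> y \<in> S" using yN ic unfolding N_def by auto
    moreover have "a \<otimes> inv y \<otimes> inv a \<otimes> inv (inv y) = inv y \<otimes> inv (a \<otimes> y \<otimes> inv a \<otimes> inv y) \<otimes> y"
      using ac yc by (simp add: m_assoc inv_mult_group)
    ultimately have "a \<otimes> inv y \<otimes> inv a \<otimes> inv (inv y) \<in> S" by simp
    moreover have "inv y \<in> N" using subgroup.m_inv_closed[OF sN yN] .
    ultimately show "inv y \<in> Y a" unfolding Y_def by auto
  next
    fix y1 y2 assume y1: "y1 \<in> Y a" and y2: "y2 \<in> Y a"
    have ac: "a \<in> carrier G" using a A by auto
    have y1N: "y1 \<in> N" and y2N: "y2 \<in> N" using y1 y2 unfolding Y_def by auto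
    hence y1c: "y1 \<in> carrier G" and y2c: "y2 \<in> carrier G" unfolding N_def by auto
    have c1: "a \<otimes> y1 \<otimes> inv a \<otimes> inv y1 \<in> S" and c2: "a \<otimes> y2 \<otimes> inv a \<otimes> inv y2 \<in> S"
      using y1 y2 unfolding Y_def by auto
    have c2': "y1 \<otimes> (a \<otimes> y2 \<otimes> inv a \<otimes> inv y2) \<otimes> inv y1 \<in> S" using y1N c2 unfolding N_def by auto
    have "(a \<otimes> y1 \<otimes> inv a \<otimes> inv y1) \<otimes> (y1 \<otimes> (a \<otimes> y2 \<otimes> inv a \<otimes> inv y2) \<otimes> inv y1) \<in> S"
      using subgroup.m_closed[OF S c1 c2'] .
    moreover have "a \<otimes> (y1 \<otimes> y2) \<otimes> inv a \<otimes> inv (y1 \<otimes> y2) = (a \<otimes> y1 \<otimes> inv a \<otimes> inv y1) \<otimes> (y1 \<otimes> (a \<otimes> y2 \<otimes> inv a \<otimes> inv y2) \<otimes> inv y1)"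
      using ac y1c y2c by (simp add: m_assoc inv_mult_group)
    ultimately have "a \<otimes> (y1 \<otimes> y2) \<otimes> inv a \<otimes> inv (y1 \<otimes> y2) \<in> S" by simp
    moreover have "y1 \<otimes> y2 \<in> N" using subgroup.m_closed[OF sN y1N y2N] .
    ultimately show "y1 \<otimes> y2 \<in> Y a" unfolding Y_def by auto
  qed
  have gY: "generate G A \<subseteq> Y a" if a: "a \<in> A" for a
  proof (rule generate_subgroup_incl[OF _ sY[OF a]])
    show "A \<subseteq> Y a" unfolding Y_def using AN cS a by auto
  qed
  define X where "X = {x \<in> N. \<forall>y\<in>generate G A. x \<otimes> y \<otimes> inv x \<otimes> inv y \<in> S}"
  have sX: "subgroup X G"
  proof (rule subgroupI)
    show "X \<subseteq> carrier G" unfolding X_def N_def by auto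
    have "\<And>y. y \<in> generate G A \<Longrightarrow> \<one> \<otimes> y \<otimes> inv \<one> \<otimes> inv y \<in> S"
    proof -
      fix y assume "y \<in> generate G A"
      hence "y \<in> carrier G" using generate_in_carrier[OF A] by auto
      thus "\<one> \<otimes> y \<otimes> inv \<one> \<otimes> inv y \<in> S" using subgroup.one_closed[OF S] by simp
    qed
    hence "\<one> \<in> X" unfolding X_def using subgroup.one_closed[OF sN] by simp
    thus "X \<noteq> {}" by auto
  next
    fix x assume x: "x \<in> X"
    have xN: "x \<in> N" using x unfolding X_def by auto
    hence xc: "x \<in> carrier G" unfolding N_def by auto
    have "\<forall>y\<in>generate G A. inv x \<otimes> y \<otimes> inv (inv x) \<otimes> inv y \<in> S"
    proof
      fix y assume y: "y \<in> generate G A"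
      hence yc: "y \<in> carrier G" using generate_in_carrier[OF A] by auto
      have c: "x \<otimes> y \<otimes> inv x \<otimes> inv y \<in> S" using x y unfolding X_def by auto
      have ic: "inv (x \<otimes> y \<otimes> inv x \<otimes> inv y) \<in> S" using subgroup.m_inv_closed[OF S c] .
      have "inv x \<otimes> inv (x \<otimes> y \<otimes> inv x \<otimes> inv y) \<otimes> x \<in> S" using xN ic unfolding N_def by auto
      moreover have "inv x \<otimes> y \<otimes> inv (inv x) \<otimes> inv y = inv x \<otimes> inv (x \<otimes> y \<otimes> inv x \<otimes> inv y) \<otimes> x"
        using xc yc by (simp add: m_assoc inv_mult_group)
      ultimately show "inv x \<otimes> y \<otimes> inv (inv x) \<otimes> inv y \<in> S" by simp
    qed
    moreover have "inv x \<in> N" using subgroup.m_inv_closed[OF sN xN] .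
    ultimately show "inv x \<in> X" unfolding X_def by auto
  next
    fix x1 x2 assume x1: "x1 \<in> X" and x2: "x2 \<in> X"
    have x1N: "x1 \<in> N" and x2N: "x2 \<in> N" using x1 x2 unfolding X_def by auto
    hence x1c: "x1 \<in> carrier G" and x2c: "x2 \<in> carrier G" unfolding N_def by auto
    have "\<forall>y\<in>generate G A. x1 \<otimes> x2 \<otimes> y \<otimes> inv (x1 \<otimes> x2) \<otimes> inv y \<in> S"
    proof
      fix y assume y: "y \<in> generate G A"
      hence yc: "y \<in> carrier G" using generate_in_carrier[OF A] by auto
      have c1: "x1 \<otimes> y \<otimes> inv x1 \<otimes> inv y \<in> S" and c2: "x2 \<otimes> y \<otimes> inv x2 \<otimes> inv y \<in> S"
        using x1 x2 y unfolding X_def by auto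
      have c2': "x1 \<otimes> (x2 \<otimes> y \<otimes> inv x2 \<otimes> inv y) \<otimes> inv x1 \<in> S" using x1N c2 unfolding N_def by auto
      have "(x1 \<otimes> (x2 \<otimes> y \<otimes> inv x2 \<otimes> inv y) \<otimes> inv x1) \<otimes> (x1 \<otimes> y \<otimes> inv x1 \<otimes> inv y) \<in> S"
        using subgroup.m_closed[OF S c2' c1] .
      moreover have "x1 \<otimes> x2 \<otimes> y \<otimes> inv (x1 \<otimes> x2) \<otimes> inv y = (x1 \<otimes> (x2 \<otimes> y \<otimes> inv x2 \<otimes> inv y) \<otimes> inv x1) \<otimes> (x1 \<otimes> y \<otimes> inv x1 \<otimes> inv y)"
        using x1c x2c yc by (simp add: m_assoc inv_mult_group)
      ultimately show "x1 \<otimes> x2 \<otimes> y \<otimes> inv (x1 \<otimes> x2) \<otimes> inv y \<in> S" by simp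
    qed
    moreover have "x1 \<otimes> x2 \<in> N" using subgroup.m_closed[OF sN x1N x2N] .
    ultimately show "x1 \<otimes> x2 \<in> X" unfolding X_def by auto
  qed
  have AX: "A \<subseteq> X"
  proof
    fix a assume a: "a \<in> A"
    have "\<forall>y\<in>generate G A. a \<otimes> y \<otimes> inv a \<otimes> inv y \<in> S" using gY[OF a] unfolding Y_def by auto
    thus "a \<in> X" unfolding X_def using AN a by auto
  qed
  have gX: "generate G A \<subseteq> X" using generate_subgroup_incl[OF AX sX] .
  have "derived_set G (generate G A) \<subseteq> S"
  proof
    fix z assume "z \<in> derived_set G (generate G A)"
    then obtain x y where xy: "x \<in> generate G A" "y \<in> generate G A" "z = x \<otimes> y \<otimes> inv x \<otimes> inv y" by blast
    thus "z \<in> S" using gX unfolding X_def by auto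
  qed
  thus ?thesis unfolding derived_def using generate_subgroup_incl[OF _ S] by blast
qed


lemma conj_hom: assumes "n \<in> carrier G" shows "(\<lambda>h. n \<otimes> h \<otimes> inv n) \<in> hom G G"
proof (rule homI)
  fix x assume "x \<in> carrier G" thus "n \<otimes> x \<otimes> inv n \<in> carrier G" using assms by simp
next
  fix x y assume "x \<in> carrier G" "y \<in> carrier G"
  thus "n \<otimes> (x \<otimes> y) \<otimes> inv n = n \<otimes> x \<otimes> inv n \<otimes> (n \<otimes> y \<otimes> inv n)" using assms by (simp add: m_assoc)
qed

lemma conj_int_pow:
  assumes "n \<in> carrier G" "a \<in> carrier G"
  shows "n \<otimes> (a [^] (k::int)) \<otimes> inv n = (n \<otimes> a \<otimes> inv n) [^] k"
  using hom_int_pow[OF conj_hom[OF assms(1)] assms(2) is_group is_group] by simp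

lemma conj_generate_single:
  assumes "n \<in> carrier G" "a \<in> carrier G"
  shows "(\<lambda>h. n \<otimes> h \<otimes> inv n) ` generate G {a} = generate G {n \<otimes> a \<otimes> inv n}"
proof -
  have c: "n \<otimes> a \<otimes> inv n \<in> carrier G" using assms by simp
  show ?thesis unfolding generate_pow[OF assms(2)] generate_pow[OF c]
  proof (intro equalityI subsetI)
    fix x assume "x \<in> (\<lambda>h. n \<otimes> h \<otimes> inv n) ` {a [^] (k::int) |k. k \<in> UNIV}"
    thus "x \<in> {(n \<otimes> a \<otimes> inv n) [^] (k::int) |k. k \<in> UNIV}" using conj_int_pow[OF assms] by auto
  next
    fix x assume "x \<in> {(n \<otimes> a \<otimes> inv n) [^] (k::int) |k. k \<in> UNIV}"
    then obtain k where "x = (n \<otimes> a \<otimes> inv n) [^] (k::int)" by auto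
    hence "x = n \<otimes> (a [^] k) \<otimes> inv n" using conj_int_pow[OF assms] by simp
    thus "x \<in> (\<lambda>h. n \<otimes> h \<otimes> inv n) ` {a [^] (k::int) |k. k \<in> UNIV}" by blast
  qed
qed

lemma normalizer_by_conj:
  assumes "n \<in> carrier G" "a \<in> carrier G" "generate G {n \<otimes> a \<otimes> inv n} = generate G {a}"
  shows "n \<in> normalizer G (generate G {a})"
proof -
  have gc: "generate G {a} \<subseteq> carrier G" using generate_incl[of "{a}"] assms(2) by auto
  show ?thesis using normalizer_iff[OF gc] conj_set_eq[OF assms(1) gc] conj_generate_single[OF assms(1,2)] assms by simp
qed

lemma conj_pre_subgroup:
  assumes X: "subgroup X G" and g: "g \<in> carrier G"
  shows "subgroup {x \<in> carrier G. g \<otimes> x \<otimes> inv g \<in> X} G"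
proof (rule subgroupI)
  show "{x \<in> carrier G. g \<otimes> x \<otimes> inv g \<in> X} \<subseteq> carrier G" by auto
  have "\<one> \<in> {x \<in> carrier G. g \<otimes> x \<otimes> inv g \<in> X}" using g subgroup.one_closed[OF X] by simp
  thus "{x \<in> carrier G. g \<otimes> x \<otimes> inv g \<in> X} \<noteq> {}" by auto
next
  fix x assume x: "x \<in> {x \<in> carrier G. g \<otimes> x \<otimes> inv g \<in> X}"
  hence xc: "x \<in> carrier G" and xX: "g \<otimes> x \<otimes> inv g \<in> X" by auto
  have "inv (g \<otimes> x \<otimes> inv g) \<in> X" using subgroup.m_inv_closed[OF X xX] .
  moreover have "inv (g \<otimes> x \<otimes> inv g) = g \<otimes> inv x \<otimes> inv g" using xc g by (simp add: inv_mult_group m_assoc)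
  ultimately show "inv x \<in> {x \<in> carrier G. g \<otimes> x \<otimes> inv g \<in> X}" using xc by simp
next
  fix x y assume x: "x \<in> {x \<in> carrier G. g \<otimes> x \<otimes> inv g \<in> X}" and y: "y \<in> {x \<in> carrier G. g \<otimes> x \<otimes> inv g \<in> X}"
  hence xc: "x \<in> carrier G" and xX: "g \<otimes> x \<otimes> inv g \<in> X" and yc: "y \<in> carrier G" and yX: "g \<otimes> y \<otimes> inv g \<in> X" by auto
  have "(g \<otimes> x \<otimes> inv g) \<otimes> (g \<otimes> y \<otimes> inv g) \<in> X" using subgroup.m_closed[OF X xX yX] .
  moreover have "(g \<otimes> x \<otimes> inv g) \<otimes> (g \<otimes> y \<otimes> inv g) = g \<otimes> (x \<otimes> y) \<otimes> inv g" using xc yc g by (simp add: m_assoc)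
  ultimately show "x \<otimes> y \<in> {x \<in> carrier G. g \<otimes> x \<otimes> inv g \<in> X}" using xc yc by simp
qed

lemma normal_mult_subgroup:
  assumes "N \<lhd> G" "subgroup H G"
  shows "subgroup (N <#> H) G"
proof -
  interpret second_isomorphism_grp N G H
    unfolding second_isomorphism_grp_def second_isomorphism_grp_axioms_def using assms by auto
  show ?thesis by (rule normal_set_mult_subgroup)
qed

lemma set_mult_mem: "x \<in> A <#> B \<longleftrightarrow> (\<exists>a\<in>A. \<exists>b\<in>B. x = a \<otimes> b)"
  unfolding set_mult_def by auto

lemma gen_insert_eq:
  assumes N: "N \<lhd> G" and a: "a \<in> carrier G"
  shows "generate G (insert a N) = N <#> generate G {a}"
proof -
  have sN: "subgroup N G" using N normal_imp_subgroup by blast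
  have Nc: "N \<subseteq> carrier G" using subgroup.subset[OF sN] .
  have sA: "subgroup (generate G {a}) G" using generate_is_subgroup a by auto
  have sP: "subgroup (N <#> generate G {a}) G" using normal_mult_subgroup[OF N sA] .
  show ?thesis
  proof
    show "generate G (insert a N) \<subseteq> N <#> generate G {a}"
    proof (rule generate_subgroup_incl[OF _ sP])
      show "insert a N \<subseteq> N <#> generate G {a}"
      proof
        fix x assume "x \<in> insert a N"
        moreover have "a \<in> N <#> generate G {a}"
          using set_mult_mem[of a N "generate G {a}"] subgroup.one_closed[OF sN] generate.incl[of a "{a}" G] a
          by (metis insertI1 l_one)
        moreover have "x \<in> N \<Longrightarrow> x \<in> N <#> generate G {a}"
          using set_mult_mem[of x N "generate G {a}"] generate.one[of G "{a}"] Nc by (metis r_one subsetD)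
        ultimately show "x \<in> N <#> generate G {a}" by blast
      qed
    qed
    show "N <#> generate G {a} \<subseteq> generate G (insert a N)"
    proof
      fix x assume "x \<in> N <#> generate G {a}"
      then obtain n b where nb: "n \<in> N" "b \<in> generate G {a}" "x = n \<otimes> b" using set_mult_mem by blast
      have ins: "insert a N \<subseteq> carrier G" using a Nc by auto
      have "n \<in> generate G (insert a N)" using nb(1) generate.incl[of n "insert a N" G] by blast
      moreover have "b \<in> generate G (insert a N)" using mono_generate[of "{a}" "insert a N"] nb(2) by auto
      ultimately show "x \<in> generate G (insert a N)" unfolding nb(3) by (rule generate.eng)
    qed
  qed
qed

end

locale xs = group G for G (structure) +
  fixes M L K :: "'a set"
  assumes fin: "finite (carrier G)" and nM: "M \<lhd> G" and nL: "L \<lhd> G" and nK: "K \<lhd> G"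
    and dM: "derived G M = {\<one>}" and dL: "derived G L = M" and dK: "derived G K = L"
    and Mne: "M \<noteq> {\<one>}" and LG': "L \<subseteq> derived G (carrier G)" and LG: "L \<noteq> carrier G"
begin

definition nb :: "'a set \<Rightarrow> bool" where "nb E \<longleftrightarrow> \<not> (E = M \<or> E = L \<or> K \<subseteq> E)"

definition good :: "'a set \<Rightarrow> 'a set \<Rightarrow> bool" where
  "good E1 E2 \<longleftrightarrow> cnt E1 \<and> cnt E2 \<and> nb E1 \<and> nb E2 \<and> subgroup_conj_class G E1 \<noteq> subgroup_conj_class G E2"

lemma sM: "subgroup M G" using nM normal_imp_subgroup by blast
lemma sL: "subgroup L G" using nL normal_imp_subgroup by blast
lemma sK: "subgroup K G" using nK normal_imp_subgroup by blast
lemma Mc: "M \<subseteq> carrier G" using subgroup.subset[OF sM] .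
lemma Lc: "L \<subseteq> carrier G" using subgroup.subset[OF sL] .
lemma Kc: "K \<subseteq> carrier G" using subgroup.subset[OF sK] .
lemma M_L: "M \<subseteq> L" using derived_incl[OF subset_refl sL] dL by simp
lemma L_K: "L \<subseteq> K" using derived_incl[OF subset_refl sK] dK by simp
lemma oneM: "\<one> \<in> M" using subgroup.one_closed[OF sM] .

lemma M_ne_L: "M \<noteq> L"
proof
  assume "M = L" hence "derived G M = M" using dL by simp
  thus False using dM Mne by simp
qed

lemma L_ne_K: "L \<noteq> K"
proof
  assume "L = K" hence "M = L" using dK dL by simp
  thus False using M_ne_L by simp
qed

lemma commL: "x \<in> L \<Longrightarrow> y \<in> L \<Longrightarrow> x \<otimes> y \<otimes> inv x \<otimes> inv y \<in> M"
  using comm_in_derived[of x L y] dL by simp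

lemma commK: "x \<in> K \<Longrightarrow> y \<in> K \<Longrightarrow> x \<otimes> y \<otimes> inv x \<otimes> inv y \<in> L"
  using comm_in_derived[of x K y] dK by simp

lemma M_ab: "x \<in> M \<Longrightarrow> y \<in> M \<Longrightarrow> x \<otimes> y = y \<otimes> x"
proof -
  assume x: "x \<in> M" and y: "y \<in> M"
  have "x \<otimes> y \<otimes> inv x \<otimes> inv y \<in> {\<one>}" using comm_in_derived[OF x y] dM by simp
  thus ?thesis using comm_one_iff x y Mc by auto
qed

lemma L_nonab: assumes "L \<subseteq> E" "\<And>x y. x \<in> E \<Longrightarrow> y \<in> E \<Longrightarrow> x \<otimes> y = y \<otimes> x" shows False
proof -
  have "derived_set G L \<subseteq> {\<one>}"
  proof
    fix z assume "z \<in> derived_set G L"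
    then obtain x y where xy: "x \<in> L" "y \<in> L" "z = x \<otimes> y \<otimes> inv x \<otimes> inv y" by blast
    have "x \<otimes> y = y \<otimes> x" using assms xy by auto
    hence "x \<otimes> y \<otimes> inv x \<otimes> inv y = \<one>" using comm_one_iff[of x y] xy Lc by auto
    thus "z \<in> {\<one>}" using xy by simp
  qed
  hence "derived G L \<subseteq> {\<one>}" unfolding derived_def
    using mono_generate[of "derived_set G L" "{\<one>}"] generate_one by simp
  hence "M \<subseteq> {\<one>}" using dL by simp
  thus False using Mne oneM by auto
qed

lemma nb_sub: "E \<subseteq> L \<Longrightarrow> E \<noteq> L \<Longrightarrow> E \<noteq> M \<Longrightarrow> nb E"
  unfolding nb_def using L_K L_ne_K by auto

lemma nb_M: "\<not> M \<subseteq> E \<Longrightarrow> nb E"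
  unfolding nb_def using M_L L_K by auto

lemma conj_M: "g \<in> carrier G \<Longrightarrow> m \<in> M \<Longrightarrow> g \<otimes> m \<otimes> inv g \<in> M"
  using nM normal_inv_iff by blast
lemma conj_L: "g \<in> carrier G \<Longrightarrow> m \<in> L \<Longrightarrow> g \<otimes> m \<otimes> inv g \<in> L"
  using nL normal_inv_iff by blast


lemma finM: "finite M" using fin Mc finite_subset by blast

lemma gen_sub: "x \<in> carrier G \<Longrightarrow> generate G {x} \<subseteq> carrier G"
  using generate_incl[of "{x}"] by auto

lemma gen_subL: "x \<in> L \<Longrightarrow> generate G {x} \<subseteq> L"
  using generate_subgroup_incl[OF _ sL, of "{x}"] by auto

lemma gen_subgroup: "x \<in> carrier G \<Longrightarrow> subgroup (generate G {x}) G"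
  using generate_is_subgroup[of "{x}"] by auto

lemma smI: "x \<in> A \<Longrightarrow> y \<in> B \<Longrightarrow> x \<otimes> y \<in> A <#> B"
  using set_mult_mem by blast

lemma smE: "z \<in> A <#> B \<Longrightarrow> (\<And>x y. x \<in> A \<Longrightarrow> y \<in> B \<Longrightarrow> z = x \<otimes> y \<Longrightarrow> P) \<Longrightarrow> P"
  using set_mult_mem by blast

lemma caseI2:
  assumes a: "a \<in> L" "a \<notin> M" and eq: "M <#> generate G {a} = L"
  shows "cnt (generate G {a}) \<and> \<not> M \<subseteq> generate G {a} \<and> \<not> generate G {a} \<subseteq> M"
proof -
  let ?A = "generate G {a}"
  have ac: "a \<in> carrier G" using a Lc by auto
  have sA: "subgroup ?A G" using gen_subgroup[OF ac] .
  have aA: "a \<in> ?A" using generate.incl[of a "{a}" G] by simp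
  have AL: "?A \<subseteq> L" using gen_subL a by auto
  define f where "f m = a \<otimes> m \<otimes> inv a \<otimes> inv m" for m
  have fM: "f m \<in> M" if m: "m \<in> M" for m
  proof -
    have "a \<otimes> m \<otimes> inv a \<in> M" using conj_M[OF ac m] .
    moreover have "inv m \<in> M" using subgroup.m_inv_closed[OF sM m] .
    ultimately show ?thesis unfolding f_def using subgroup.m_closed[OF sM] by blast
  qed
  have fmult: "f (m1 \<otimes> m2) = f m1 \<otimes> f m2" if m1: "m1 \<in> M" and m2: "m2 \<in> M" for m1 m2
  proof -
    have c1: "m1 \<in> carrier G" and c2: "m2 \<in> carrier G" using m1 m2 Mc by auto
    define u where "u = a \<otimes> m1 \<otimes> inv a"
    define v where "v = a \<otimes> m2 \<otimes> inv a"
    have uM: "u \<in> M" unfolding u_def using conj_M[OF ac m1] .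
    have vM: "v \<in> M" unfolding v_def using conj_M[OF ac m2] .
    have uc: "u \<in> carrier G" and vc: "v \<in> carrier G" using uM vM Mc by auto
    have i1: "inv m1 \<in> M" and i2: "inv m2 \<in> M" using subgroup.m_inv_closed[OF sM] m1 m2 by auto
    have e1: "f (m1 \<otimes> m2) = u \<otimes> v \<otimes> (inv m2 \<otimes> inv m1)"
      unfolding f_def u_def v_def using ac c1 c2 by (simp add: m_assoc inv_mult_group)
    have e2: "f m1 \<otimes> f m2 = u \<otimes> (inv m1 \<otimes> v) \<otimes> inv m2"
      unfolding f_def u_def v_def using ac c1 c2 by (simp add: m_assoc)
    have s1: "inv m1 \<otimes> v = v \<otimes> inv m1" using M_ab[OF i1 vM] .
    have s2: "inv m1 \<otimes> inv m2 = inv m2 \<otimes> inv m1" using M_ab[OF i1 i2] .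
    have "f m1 \<otimes> f m2 = u \<otimes> v \<otimes> (inv m1 \<otimes> inv m2)" using e2 s1 uc vc c1 c2 by (simp add: m_assoc)
    thus ?thesis using e1 s2 by simp
  qed
  have finv: "f (inv m) = inv (f m)" if m: "m \<in> M" for m
  proof -
    have mc: "m \<in> carrier G" using m Mc by auto
    define u where "u = a \<otimes> m \<otimes> inv a"
    have uM: "u \<in> M" unfolding u_def using conj_M[OF ac m] .
    have iu: "inv u \<in> M" using subgroup.m_inv_closed[OF sM uM] .
    have e1: "f (inv m) = inv u \<otimes> m" unfolding f_def u_def using ac mc by (simp add: m_assoc inv_mult_group)
    have e2: "inv (f m) = m \<otimes> inv u" unfolding f_def u_def using ac mc by (simp add: m_assoc inv_mult_group)
    show ?thesis using e1 e2 M_ab[OF iu m] by simp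
  qed
  have f1: "f \<one> = \<one>" unfolding f_def using ac by simp
  define I where "I = f ` M"
  have IM: "I \<subseteq> M" unfolding I_def using fM by auto
  have sI: "subgroup I G"
  proof (rule subgroupI)
    show "I \<subseteq> carrier G" using IM Mc by auto
    show "I \<noteq> {}" unfolding I_def using oneM by auto
  next
    fix x assume "x \<in> I"
    then obtain m where m: "m \<in> M" "x = f m" unfolding I_def by auto
    have "inv x = f (inv m)" using finv m by simp
    moreover have "inv m \<in> M" using subgroup.m_inv_closed[OF sM m(1)] .
    ultimately show "inv x \<in> I" unfolding I_def by auto
  next
    fix x y assume "x \<in> I" "y \<in> I"
    then obtain m1 m2 where m: "m1 \<in> M" "x = f m1" "m2 \<in> M" "y = f m2" unfolding I_def by auto
    have "x \<otimes> y = f (m1 \<otimes> m2)" using fmult m by simp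
    moreover have "m1 \<otimes> m2 \<in> M" using subgroup.m_closed[OF sM m(1) m(3)] .
    ultimately show "x \<otimes> y \<in> I" unfolding I_def by auto
  qed
  have gen: "generate G (insert a M) = L" using gen_insert_eq[OF nM ac] eq by simp
  have insc: "insert a M \<subseteq> carrier G" using ac Mc by auto
  have "derived G (generate G (insert a M)) \<subseteq> I"
  proof (rule derived_gen_sub[OF insc sI])
    fix x s assume x: "x \<in> insert a M" and s: "s \<in> I"
    then obtain m where m: "m \<in> M" "s = f m" unfolding I_def by auto
    have mc: "m \<in> carrier G" using m Mc by auto
    show "x \<otimes> s \<otimes> inv x \<in> I \<and> inv x \<otimes> s \<otimes> x \<in> I"
    proof (cases "x = a")
      case True
      have m1: "a \<otimes> m \<otimes> inv a \<in> M" using conj_M[OF ac m(1)] .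
      have m2: "inv a \<otimes> m \<otimes> a \<in> M" using conj_M[of "inv a" m] ac m(1) by simp
      have "a \<otimes> f m \<otimes> inv a = f (a \<otimes> m \<otimes> inv a)" unfolding f_def using ac mc by (simp add: m_assoc inv_mult_group)
      moreover have "inv a \<otimes> f m \<otimes> a = f (inv a \<otimes> m \<otimes> a)" unfolding f_def using ac mc by (simp add: m_assoc inv_mult_group)
      ultimately show ?thesis using True m m1 m2 unfolding I_def by auto
    next
      case False
      hence xM: "x \<in> M" using x by auto
      have sM': "s \<in> M" using s IM by auto
      have xc: "x \<in> carrier G" and sc: "s \<in> carrier G" using xM sM' Mc by auto
      have "x \<otimes> s = s \<otimes> x" using M_ab[OF xM sM'] .
      hence "x \<otimes> s \<otimes> inv x = s" "inv x \<otimes> s \<otimes> x = s" using xc sc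
        by (simp_all add: m_assoc) (metis inv_cancel_l2 m_assoc)
      thus ?thesis using s by simp
    qed
  next
    fix x y assume x: "x \<in> insert a M" and y: "y \<in> insert a M"
    show "x \<otimes> y \<otimes> inv x \<otimes> inv y \<in> I"
    proof (cases "x = a")
      case True note xa = this
      show ?thesis
      proof (cases "y = a")
        case True
        have "x \<otimes> y \<otimes> inv x \<otimes> inv y = \<one>" using xa True ac by (simp add: m_assoc)
        thus ?thesis using subgroup.one_closed[OF sI] by simp
      next
        case False
        hence yM: "y \<in> M" using y by auto
        have "x \<otimes> y \<otimes> inv x \<otimes> inv y = f y" unfolding f_def using xa by simp
        thus ?thesis unfolding I_def using yM by auto
      qed
    next
      case False
      hence xM: "x \<in> M" using x by auto
      have xc: "x \<in> carrier G" using xM Mc by auto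
      show ?thesis
      proof (cases "y = a")
        case True
        have "x \<otimes> y \<otimes> inv x \<otimes> inv y = inv (f x)" unfolding f_def using True ac xc by (simp add: m_assoc inv_mult_group)
        moreover have "f x \<in> I" unfolding I_def using xM by auto
        ultimately show ?thesis using subgroup.m_inv_closed[OF sI] by simp
      next
        case False
        hence yM: "y \<in> M" using y by auto
        have yc: "y \<in> carrier G" using yM Mc by auto
        have "x \<otimes> y = y \<otimes> x" using M_ab[OF xM yM] .
        hence "x \<otimes> y \<otimes> inv x \<otimes> inv y = \<one>" using comm_one_iff[OF xc yc] by blast
        thus ?thesis using subgroup.one_closed[OF sI] by simp
      qed
    qed
  qed
  hence "M \<subseteq> I" using gen dL by simp
  hence IeqM: "f ` M = M" using IM unfolding I_def by auto
  have finj: "inj_on f M" using eq_card_imp_inj_on[OF finM, of f] IeqM by simp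
  have Cfree: "m = \<one>" if m: "m \<in> M" and cm: "a \<otimes> m = m \<otimes> a" for m
  proof -
    have mc: "m \<in> carrier G" using m Mc by auto
    have "f m = \<one>" unfolding f_def using comm_one_iff[OF ac mc] cm by simp
    thus ?thesis using finj f1 m oneM unfolding inj_on_def by metis
  qed
  have AM: "x = \<one>" if x: "x \<in> ?A" "x \<in> M" for x
  proof -
    have "a \<otimes> x = x \<otimes> a" using commute_gen[OF ac _ _ x(1)] ac by auto
    thus ?thesis using Cfree x(2) by simp
  qed
  obtain g where g: "g \<in> carrier G" "g \<notin> L" using LG Lc by auto
  define a' where "a' = g \<otimes> a \<otimes> inv g"
  have a'L: "a' \<in> L" unfolding a'_def using conj_L[OF g(1) a(1)] .
  hence "a' \<in> M <#> ?A" using eq by simp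
  then obtain m0 b where mb: "m0 \<in> M" "b \<in> ?A" "a' = m0 \<otimes> b" by (rule smE)
  have bc: "b \<in> carrier G" using mb(2) gen_sub[OF ac] by auto
  have m0c: "m0 \<in> carrier G" using mb(1) Mc by auto
  let ?B = "generate G {b}"
  have sB: "subgroup ?B G" using gen_subgroup[OF bc] .
  have bB: "b \<in> ?B" using generate.incl[of b "{b}" G] by simp
  have BA: "?B \<subseteq> ?A" using generate_subgroup_incl[OF _ sA, of "{b}"] mb(2) by auto
  have sX: "subgroup (M <#> ?B) G" using normal_mult_subgroup[OF nM sB] .
  let ?Y = "{x \<in> carrier G. g \<otimes> x \<otimes> inv g \<in> M <#> ?B}"
  have sY: "subgroup ?Y G" using conj_pre_subgroup[OF sX g(1)] .
  have insY: "insert a M \<subseteq> ?Y"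
  proof
    fix x assume x: "x \<in> insert a M"
    show "x \<in> ?Y"
    proof (cases "x = a")
      case True
      have "g \<otimes> a \<otimes> inv g \<in> M <#> ?B" using smI[OF mb(1) bB] mb(3) a'_def by simp
      thus ?thesis using True ac by simp
    next
      case False
      hence xM: "x \<in> M" using x by auto
      have xc: "x \<in> carrier G" using xM Mc by auto
      have gx: "g \<otimes> x \<otimes> inv g \<in> M" using conj_M[OF g(1) xM] .
      have "g \<otimes> x \<otimes> inv g = (g \<otimes> x \<otimes> inv g) \<otimes> \<one>" using g(1) xc by simp
      moreover have "\<one> \<in> ?B" using subgroup.one_closed[OF sB] .
      ultimately have "g \<otimes> x \<otimes> inv g \<in> M <#> ?B" using smI[OF gx] by metis
      thus ?thesis using xc by simp
    qed
  qed
  have LY: "L \<subseteq> ?Y" using generate_subgroup_incl[OF insY sY] gen by simp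
  have "inv g \<otimes> a \<otimes> inv (inv g) \<in> L" using conj_L[of "inv g" a] g(1) a(1) by simp
  hence "g \<otimes> (inv g \<otimes> a \<otimes> inv (inv g)) \<otimes> inv g \<in> M <#> ?B" using LY by auto
  hence "a \<in> M <#> ?B" using g(1) ac by (simp add: m_assoc)
  then obtain m1 b' where mb': "m1 \<in> M" "b' \<in> ?B" "a = m1 \<otimes> b'" by (rule smE)
  have b'c: "b' \<in> carrier G" using mb'(2) gen_sub[OF bc] by auto
  have m1c: "m1 \<in> carrier G" using mb'(1) Mc by auto
  have "m1 = a \<otimes> inv b'" using mb'(3) m1c b'c by (simp add: m_assoc)
  moreover have "a \<otimes> inv b' \<in> ?A" using subgroup.m_closed[OF sA aA subgroup.m_inv_closed[OF sA]] mb'(2) BA by auto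
  ultimately have "m1 = \<one>" using AM mb'(1) by simp
  hence "a \<in> ?B" using mb' b'c by simp
  hence AB: "?A \<subseteq> ?B" using generate_subgroup_incl[OF _ sB, of "{a}"] by auto
  have BeqA: "?B = ?A" using AB BA by auto
  have Cb: "m = \<one>" if m: "m \<in> M" and cm: "b \<otimes> m = m \<otimes> b" for m
  proof -
    have mc: "m \<in> carrier G" using m Mc by auto
    have "m \<otimes> a = a \<otimes> m" using commute_gen[OF mc _ _, of "{b}" a] bc cm BeqA aA by auto
    thus ?thesis using Cfree m by simp
  qed
  define h where "h x = x \<otimes> b \<otimes> inv x \<otimes> inv b" for x
  have hM: "h x \<in> M" if x: "x \<in> M" for x
  proof -
    have xc: "x \<in> carrier G" using x Mc by auto
    have "b \<otimes> inv x \<otimes> inv b \<in> M" using conj_M[OF bc subgroup.m_inv_closed[OF sM x]] .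
    hence "x \<otimes> (b \<otimes> inv x \<otimes> inv b) \<in> M" using subgroup.m_closed[OF sM x] by blast
    thus ?thesis unfolding h_def using xc bc by (simp add: m_assoc)
  qed
  have hinj: "inj_on h M"
  proof (rule inj_onI)
    fix x y assume x: "x \<in> M" and y: "y \<in> M" and e: "h x = h y"
    have xc: "x \<in> carrier G" and yc: "y \<in> carrier G" using x y Mc by auto
    have e1: "(x \<otimes> b \<otimes> inv x) \<otimes> inv b = (y \<otimes> b \<otimes> inv y) \<otimes> inv b" using e unfolding h_def .
    have e2: "x \<otimes> b \<otimes> inv x = y \<otimes> b \<otimes> inv y" using right_cancel[of "inv b" "x \<otimes> b \<otimes> inv x" "y \<otimes> b \<otimes> inv y"] e1 xc yc bc by simp
    have "inv y \<otimes> x \<in> M" using subgroup.m_closed[OF sM subgroup.m_inv_closed[OF sM y] x] .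
    moreover have "b \<otimes> (inv y \<otimes> x) = (inv y \<otimes> x) \<otimes> b"
    proof -
      have "inv y \<otimes> (x \<otimes> b \<otimes> inv x) \<otimes> x = inv y \<otimes> (y \<otimes> b \<otimes> inv y) \<otimes> x" using e2 by simp
      thus ?thesis using xc yc bc by (simp add: m_assoc)
    qed
    ultimately have "inv y \<otimes> x = \<one>" using Cb by simp
    thus "x = y" using xc yc by (metis inv_closed inv_inv l_inv_ex r_inv inv_equality)
  qed
  have himg: "h ` M = M"
  proof (rule card_subset_eq[OF finM])
    show "h ` M \<subseteq> M" using hM by auto
    show "card (h ` M) = card M" using card_image[OF hinj] .
  qed
  obtain x where x: "x \<in> M" "h x = m0" using himg mb(1) by (metis imageE)
  have xc: "x \<in> carrier G" using x Mc by auto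
  have "x \<otimes> b \<otimes> inv x = h x \<otimes> b" unfolding h_def using xc bc by (simp add: m_assoc)
  hence xb: "x \<otimes> b \<otimes> inv x = g \<otimes> a \<otimes> inv g" using x(2) mb(3) a'_def by simp
  define n where "n = inv x \<otimes> g"
  have nc: "n \<in> carrier G" unfolding n_def using xc g(1) by simp
  have "n \<otimes> a \<otimes> inv n = inv x \<otimes> (g \<otimes> a \<otimes> inv g) \<otimes> x" unfolding n_def using xc g(1) ac
    by (simp add: m_assoc inv_mult_group)
  also have "... = inv x \<otimes> (x \<otimes> b \<otimes> inv x) \<otimes> x" using xb by simp
  also have "... = b" using xc bc by (simp add: m_assoc)
  finally have nab: "n \<otimes> a \<otimes> inv n = b" .
  have nN: "n \<in> normalizer G ?A" using normalizer_by_conj[OF nc ac] nab BeqA by simp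
  have nA: "n \<notin> ?A"
  proof
    assume "n \<in> ?A"
    hence nL: "n \<in> L" using AL by auto
    have "x \<in> L" using x(1) M_L by auto
    hence "x \<otimes> n \<in> L" using subgroup.m_closed[OF sL _ nL] by blast
    moreover have "x \<otimes> n = g" unfolding n_def using xc g(1) by simp
    ultimately show False using g(2) by simp
  qed
  have a1: "a \<noteq> \<one>" using a(2) oneM by auto
  have "cnt ?A" using cnt_intro[OF sA aA a1 nN nA] .
  moreover have "\<not> M \<subseteq> ?A"
  proof
    assume "M \<subseteq> ?A"
    hence "M \<subseteq> {\<one>}" using AM by auto
    thus False using Mne oneM by auto
  qed
  moreover have "\<not> ?A \<subseteq> M" using aA a(2) by auto
  ultimately show ?thesis by simp
qed


lemma cnt_via_L:
  assumes sE: "subgroup E G" and ME: "M \<subseteq> E" and EL: "E \<subseteq> L" and ne: "E \<noteq> L" and x: "x \<in> E" "x \<noteq> \<one>"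
  shows "cnt E"
proof -
  have "L \<subseteq> normalizer G E" using norm_der[OF sL sE] dL ME EL by simp
  moreover obtain l where "l \<in> L" "l \<notin> E" using EL ne by auto
  ultimately show ?thesis using cnt_intro[OF sE x] by blast
qed

lemma prodML:
  assumes a: "a \<in> L"
  shows "subgroup (M <#> generate G {a}) G" "M \<subseteq> M <#> generate G {a}" "a \<in> M <#> generate G {a}"
    "M <#> generate G {a} \<subseteq> L"
proof -
  have ac: "a \<in> carrier G" using a Lc by auto
  have sA: "subgroup (generate G {a}) G" using gen_subgroup[OF ac] .
  show "subgroup (M <#> generate G {a}) G" using normal_mult_subgroup[OF nM sA] .
  show "M \<subseteq> M <#> generate G {a}"
  proof
    fix m assume m: "m \<in> M"
    have "m \<otimes> \<one> \<in> M <#> generate G {a}" using smI[OF m subgroup.one_closed[OF sA]] .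
    thus "m \<in> M <#> generate G {a}" using m Mc by auto
  qed
  have "\<one> \<otimes> a \<in> M <#> generate G {a}" using smI[OF oneM generate.incl[of a "{a}" G]] by simp
  thus "a \<in> M <#> generate G {a}" using ac by simp
  show "M <#> generate G {a} \<subseteq> L"
  proof
    fix z assume "z \<in> M <#> generate G {a}"
    then obtain m b where mb: "m \<in> M" "b \<in> generate G {a}" "z = m \<otimes> b" by (rule smE)
    have "m \<in> L" using mb(1) M_L by auto
    moreover have "b \<in> L" using mb(2) gen_subL[OF a] by auto
    ultimately show "z \<in> L" using mb(3) subgroup.m_closed[OF sL] by blast
  qed
qed

lemma caseI:
  assumes nc: "\<not> (\<exists>y\<in>M. M = generate G {y})"
  shows "\<exists>E1 E2. good E1 E2"
proof -
  obtain y where y: "y \<in> M" "y \<noteq> \<one>" using Mne oneM by blast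
  have yc: "y \<in> carrier G" using y Mc by auto
  let ?E1 = "generate G {y}"
  have sE1: "subgroup ?E1 G" using gen_subgroup[OF yc] .
  have E1M: "?E1 \<subseteq> M" using generate_subgroup_incl[OF _ sM, of "{y}"] y by auto
  have yE1: "y \<in> ?E1" using generate.incl[of y "{y}" G] by simp
  have E1ne: "?E1 \<noteq> M" using nc y by auto
  obtain m where m: "m \<in> M" "m \<notin> ?E1" using E1M E1ne by auto
  have mN: "m \<in> normalizer G ?E1"
  proof (rule norm_by_commute)
    show "m \<in> carrier G" using m Mc by auto
    show "?E1 \<subseteq> carrier G" using E1M Mc by auto
    fix h assume "h \<in> ?E1" thus "m \<otimes> h = h \<otimes> m" using M_ab m E1M by auto
  qed
  have c1: "cnt ?E1" using cnt_intro[OF sE1 yE1 y(2) mN m(2)] .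
  have nb1: "nb ?E1"
  proof (rule nb_sub)
    show "?E1 \<subseteq> L" using E1M M_L by auto
    show "?E1 \<noteq> L" using E1M M_L M_ne_L by auto
    show "?E1 \<noteq> M" using E1ne .
  qed
  obtain a where a: "a \<in> L" "a \<notin> M" using M_L M_ne_L by auto
  have ac: "a \<in> carrier G" using a Lc by auto
  show ?thesis
  proof (cases "M <#> generate G {a} = L")
    case True
    have r: "cnt (generate G {a}) \<and> \<not> M \<subseteq> generate G {a} \<and> \<not> generate G {a} \<subseteq> M"
      using caseI2[OF a True] .
    have "subgroup_conj_class G ?E1 \<noteq> subgroup_conj_class G (generate G {a})"
      using class_diff_sub[OF nM E1M] r gen_sub[OF ac] by blast
    thus ?thesis unfolding good_def using c1 nb1 r nb_M by blast
  next
    case False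
    let ?E2 = "M <#> generate G {a}"
    note P = prodML[OF a(1)]
    have c2: "cnt ?E2" using cnt_via_L[OF P(1) P(2) P(4) False P(3)] a oneM by auto
    have nb2: "nb ?E2" using nb_sub[OF P(4) False] P(3) a(2) by auto
    have "subgroup_conj_class G ?E2 \<noteq> subgroup_conj_class G ?E1"
      using class_diff_sup[OF nM P(2)] E1M E1ne Mc P(4) Lc by auto
    thus ?thesis unfolding good_def using c1 nb1 c2 nb2 by metis
  qed
qed

end

context xs begin

lemma cyc_cent:
  assumes y: "y \<in> M" and My: "M = generate G {y}"
  shows "L \<subseteq> cent M"
proof -
  have yc: "y \<in> carrier G" using y Mc by auto
  have pw: "\<exists>k::int. \<forall>m\<in>M. g \<otimes> m \<otimes> inv g = m [^] k" if g: "g \<in> carrier G" for g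
  proof -
    have "g \<otimes> y \<otimes> inv g \<in> M" using conj_M[OF g y] .
    then obtain k::int where k: "g \<otimes> y \<otimes> inv g = y [^] k" using My generate_pow[OF yc] by auto
    have "\<forall>m\<in>M. g \<otimes> m \<otimes> inv g = m [^] k"
    proof
      fix m assume "m \<in> M"
      then obtain j::int where j: "m = y [^] j" using My generate_pow[OF yc] by auto
      have "g \<otimes> m \<otimes> inv g = (g \<otimes> y \<otimes> inv g) [^] j" using conj_int_pow[OF g yc] j by simp
      also have "... = y [^] (k * j)" using k int_pow_pow[OF yc] by simp
      also have "... = (y [^] j) [^] k" using int_pow_pow[OF yc] by (simp add: mult.commute)
      finally show "g \<otimes> m \<otimes> inv g = m [^] k" using j by simp
    qed
    thus ?thesis by blast
  qed
  have comm2: "g \<otimes> (h \<otimes> w \<otimes> inv h) \<otimes> inv g = h \<otimes> (g \<otimes> w \<otimes> inv g) \<otimes> inv h"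
    if g: "g \<in> carrier G" and h: "h \<in> carrier G" and w: "w \<in> M" for g h w
  proof -
    obtain kg :: int where kg: "\<forall>m\<in>M. g \<otimes> m \<otimes> inv g = m [^] kg" using pw[OF g] by blast
    obtain kh :: int where kh: "\<forall>m\<in>M. h \<otimes> m \<otimes> inv h = m [^] kh" using pw[OF h] by blast
    have wc: "w \<in> carrier G" using w Mc by auto
    have w1: "h \<otimes> w \<otimes> inv h \<in> M" using conj_M[OF h w] .
    have w2: "g \<otimes> w \<otimes> inv g \<in> M" using conj_M[OF g w] .
    have "g \<otimes> (h \<otimes> w \<otimes> inv h) \<otimes> inv g = (w [^] kh) [^] kg" using kg w1 kh w by simp
    also have "... = w [^] (kh * kg)" using int_pow_pow[OF wc] by simp
    also have "... = (w [^] kg) [^] kh" using int_pow_pow[OF wc] by (simp add: mult.commute)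
    also have "... = h \<otimes> (g \<otimes> w \<otimes> inv g) \<otimes> inv h" using kh w2 kg w by simp
    finally show ?thesis .
  qed
  have "derived_set G (carrier G) \<subseteq> cent M"
  proof
    fix c assume "c \<in> derived_set G (carrier G)"
    then obtain g h where gh: "g \<in> carrier G" "h \<in> carrier G" "c = g \<otimes> h \<otimes> inv g \<otimes> inv h" by blast
    have cc: "c \<in> carrier G" using gh by simp
    have "\<forall>m\<in>M. m \<otimes> c = c \<otimes> m"
    proof
      fix m assume m: "m \<in> M"
      have mc: "m \<in> carrier G" using m Mc by auto
      define w where "w = inv g \<otimes> (inv h \<otimes> m \<otimes> inv (inv h)) \<otimes> inv (inv g)"
      have "inv h \<otimes> m \<otimes> inv (inv h) \<in> M" using conj_M[of "inv h" m] gh m by simp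
      hence wM: "w \<in> M" unfolding w_def using conj_M[of "inv g"] gh by simp
      have e: "g \<otimes> (h \<otimes> w \<otimes> inv h) \<otimes> inv g = h \<otimes> (g \<otimes> w \<otimes> inv g) \<otimes> inv h" using comm2[OF gh(1,2) wM] .
      have l: "g \<otimes> (h \<otimes> w \<otimes> inv h) \<otimes> inv g = c \<otimes> m \<otimes> inv c" unfolding w_def gh(3) using gh mc
        by (simp add: m_assoc inv_mult_group)
      have r: "h \<otimes> (g \<otimes> w \<otimes> inv g) \<otimes> inv h = m" unfolding w_def using gh mc by (simp add: m_assoc)
      have "c \<otimes> m \<otimes> inv c = m" using e l r by simp
      hence "c \<otimes> m \<otimes> inv c \<otimes> c = m \<otimes> c" by simp
      thus "m \<otimes> c = c \<otimes> m" using cc mc by (simp add: m_assoc)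
    qed
    thus "c \<in> cent M" unfolding cent_def using cc by auto
  qed
  hence "derived G (carrier G) \<subseteq> cent M" unfolding derived_def using gen_in_cent[OF Mc] by blast
  thus ?thesis using LG' by auto
qed

lemma commute_cent: "x \<in> L \<Longrightarrow> L \<subseteq> cent M \<Longrightarrow> m \<in> M \<Longrightarrow> m \<otimes> x = x \<otimes> m"
  unfolding cent_def by auto

lemma caseII_neq:
  assumes Lc: "L \<subseteq> cent M" and a: "a \<in> L"
  shows "M <#> generate G {a} \<noteq> L"
proof
  assume eq: "M <#> generate G {a} = L"
  have ac: "a \<in> carrier G" using a Lc by (auto simp: cent_def)
  have com: "x \<otimes> y = y \<otimes> x" if x: "x \<in> M <#> generate G {a}" and y: "y \<in> M <#> generate G {a}" for x y
  proof -
    obtain m1 b1 where 1: "m1 \<in> M" "b1 \<in> generate G {a}" "x = m1 \<otimes> b1" using x by (rule smE)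
    obtain m2 b2 where 2: "m2 \<in> M" "b2 \<in> generate G {a}" "y = m2 \<otimes> b2" using y by (rule smE)
    have m1c: "m1 \<in> carrier G" and m2c: "m2 \<in> carrier G" using 1 2 Mc by auto
    have b1c: "b1 \<in> carrier G" and b2c: "b2 \<in> carrier G" using 1 2 gen_sub[OF ac] by auto
    have ab2: "a \<otimes> b2 = b2 \<otimes> a" using commute_gen[OF ac, of "{a}" b2] ac 2 by auto
    have bb: "b2 \<otimes> b1 = b1 \<otimes> b2" using commute_gen[OF b2c, of "{a}" b1] ac ab2 1 by auto
    have mb: "m \<otimes> b = b \<otimes> m" if m: "m \<in> M" and b: "b \<in> generate G {a}" for m b
    proof -
      have mc: "m \<in> carrier G" using m Mc by auto
      have "m \<otimes> a = a \<otimes> m" using commute_cent[OF a Lc m] .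
      thus ?thesis using commute_gen[OF mc, of "{a}" b] ac b by auto
    qed
    have mm: "m1 \<otimes> m2 = m2 \<otimes> m1" using M_ab 1 2 by auto
    have "x \<otimes> y = m1 \<otimes> (b1 \<otimes> m2) \<otimes> b2" using 1 2 m1c m2c b1c b2c by (simp add: m_assoc)
    also have "... = m1 \<otimes> (m2 \<otimes> b1) \<otimes> b2" using mb[OF 2(1) 1(2)] by simp
    also have "... = (m1 \<otimes> m2) \<otimes> (b1 \<otimes> b2)" using m1c m2c b1c b2c by (simp add: m_assoc)
    also have "... = (m2 \<otimes> m1) \<otimes> (b2 \<otimes> b1)" using mm bb by simp
    also have "... = m2 \<otimes> (m1 \<otimes> b2) \<otimes> b1" using m1c m2c b1c b2c by (simp add: m_assoc)
    also have "... = m2 \<otimes> (b2 \<otimes> m1) \<otimes> b1" using mb[OF 1(1) 2(2)] by simp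
    also have "... = y \<otimes> x" using 1 2 m1c m2c b1c b2c by (simp add: m_assoc)
    finally show ?thesis .
  qed
  show False using L_nonab[of "M <#> generate G {a}"] eq com by auto
qed


lemma sub_nat_pow: "subgroup H G \<Longrightarrow> x \<in> H \<Longrightarrow> x [^] (n::nat) \<in> H"
  using subgroup_int_pow_closed[of H x "int n"] by (simp add: int_pow_int)

lemma ordc: "x \<in> carrier G \<Longrightarrow> card (generate G {x}) = ord x"
  using generate_pow_card by simp

lemma finGen: "x \<in> carrier G \<Longrightarrow> finite (generate G {x})"
  using gen_sub fin finite_subset by blast

lemma ord_pos: "x \<in> carrier G \<Longrightarrow> 0 < ord x"
  using ord_ge_1[OF fin] by fastforce

lemma pow_ord_dvd: "x \<in> carrier G \<Longrightarrow> x [^] (n::nat) = \<one> \<Longrightarrow> ord x dvd n"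
  using pow_eq_id by blast

lemma sub_gen_dvd:
  assumes x: "x \<in> carrier G" and z: "z \<in> generate G {x}"
  shows "ord z dvd ord x"
proof -
  obtain k::int where k: "z = x [^] k" using z generate_pow[OF x] by auto
  have zc: "z \<in> carrier G" using k x by simp
  have "z [^] (int (ord x)) = x [^] (k * int (ord x))" using k int_pow_pow[OF x] by simp
  also have "... = (x [^] (int (ord x))) [^] k" using int_pow_pow[OF x] by (simp add: mult.commute)
  also have "... = \<one>" using x by (simp add: int_pow_int)
  finally have "z [^] (ord x) = \<one>" by (simp add: int_pow_int)
  thus ?thesis using pow_ord_dvd[OF zc] by simp
qed

lemma gen_commute:
  assumes x: "x \<in> carrier G" and u: "u \<in> generate G {x}" and v: "v \<in> generate G {x}"
  shows "u \<otimes> v = v \<otimes> u"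
proof -
  have uc: "u \<in> carrier G" using u gen_sub[OF x] by auto
  have "u \<otimes> x = x \<otimes> u" using commute_gen[OF x, of "{x}" u] x u by auto
  thus ?thesis using commute_gen[OF uc, of "{x}" v] x v by auto
qed


lemma alpha:
  assumes Lce: "L \<subseteq> cent M" and c: "c \<in> L" "c \<noteq> \<one>" "\<not> M \<subseteq> generate G {c}"
  shows "\<exists>E1 E2. good E1 E2"
proof -
  obtain a where a: "a \<in> L" "a \<notin> M" using M_L M_ne_L by auto
  let ?E1 = "M <#> generate G {a}"
  note P = prodML[OF a(1)]
  have ne: "?E1 \<noteq> L" using caseII_neq[OF Lce a(1)] .
  have c1: "cnt ?E1" using cnt_via_L[OF P(1) P(2) P(4) ne P(3)] a oneM by auto
  have nb1: "nb ?E1" using nb_sub[OF P(4) ne] P(3) a(2) by auto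
  have cc: "c \<in> carrier G" using c Lc by auto
  let ?E2 = "generate G {c}"
  have sE2: "subgroup ?E2 G" using gen_subgroup[OF cc] .
  have cE2: "c \<in> ?E2" using generate.incl[of c "{c}" G] by simp
  obtain m where m: "m \<in> M" "m \<notin> ?E2" using c(3) by auto
  have mc: "m \<in> carrier G" using m Mc by auto
  have mN: "m \<in> normalizer G ?E2"
  proof (rule norm_by_commute[OF mc gen_sub[OF cc]])
    fix h assume h: "h \<in> ?E2"
    have "m \<otimes> c = c \<otimes> m" using commute_cent[OF c(1) Lce m(1)] .
    thus "m \<otimes> h = h \<otimes> m" using commute_gen[OF mc, of "{c}" h] cc h by auto
  qed
  have c2: "cnt ?E2" using cnt_intro[OF sE2 cE2 c(2) mN m(2)] .
  have nb2: "nb ?E2" using nb_M c(3) by simp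
  have "subgroup_conj_class G ?E1 \<noteq> subgroup_conj_class G ?E2"
    using class_diff_sup[OF nM P(2) c(3) gen_sub[OF cc]] P(4) Lc by auto
  thus ?thesis unfolding good_def using c1 c2 nb1 nb2 by blast
qed

end

locale xs2 = xs +
  fixes y
  assumes yM: "y \<in> M" and My: "M = generate G {y}"
    and beta: "\<And>c. c \<in> L \<Longrightarrow> c \<noteq> \<one> \<Longrightarrow> M \<subseteq> generate G {c}"
begin

lemma yc: "y \<in> carrier G" using yM Mc by auto
lemma Lcent: "L \<subseteq> cent M" using cyc_cent[OF yM My] .

definition p where "p = ord y"

lemma cardM: "card M = p" unfolding p_def using ordc[OF yc] My by simp

lemma p2: "p \<ge> 2"
proof -
  obtain m where m: "m \<in> M" "m \<noteq> \<one>" using Mne oneM by blast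
  have "{\<one>, m} \<subseteq> M" using m oneM by auto
  hence "card {\<one>, m} \<le> card M" using card_mono[OF finM] by blast
  thus ?thesis using m cardM by simp
qed

lemma pP: "u dvd p \<Longrightarrow> u = 1 \<or> u = p"
proof (rule ccontr)
  assume u: "u dvd p" and nu: "\<not> (u = 1 \<or> u = p)"
  have p0: "p > 0" using p2 by simp
  have u0: "u > 0" using u p0 by (metis dvd_0_left_iff gr0I)
  have u1: "u > 1" using u0 nu by simp
  have up: "u < p" using u nu p0 by (simp add: dvd_imp_le le_neq_implies_less)
  have pu: "ord (y [^] u) = p div u" using ord_pow[OF yc] u u0 unfolding p_def by simp
  have yu: "y [^] u \<noteq> \<one>"
  proof
    assume "y [^] u = \<one>"
    hence "p dvd u" using pow_ord_dvd[OF yc] unfolding p_def by simp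
    thus False using up u0 by (simp add: nat_dvd_not_less)
  qed
  have yuL: "y [^] u \<in> L" using yM M_L sub_nat_pow[OF sL] by auto
  have yuc: "y [^] u \<in> carrier G" using yc by simp
  have "M \<subseteq> generate G {y [^] u}" using beta[OF yuL yu] .
  hence "card M \<le> card (generate G {y [^] u})" using card_mono[OF finGen[OF yuc]] by blast
  hence "p \<le> p div u" using cardM ordc[OF yuc] pu by simp
  moreover have "p div u < p" using u1 p0 by simp
  ultimately show False by simp
qed

lemma M_in_gen: assumes x: "x \<in> L" "x \<notin> M" shows "M \<subseteq> generate G {x}"
  using beta[OF x(1)] x oneM by auto

lemma p_dvd_ord: assumes xc: "x \<in> carrier G" and Mx: "M \<subseteq> generate G {x}" shows "p dvd ord x"
  using sub_gen_dvd[OF xc] Mx yM unfolding p_def by auto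

lemma genx_neL: assumes x: "x \<in> L" shows "generate G {x} \<noteq> L"
proof
  assume e: "generate G {x} = L"
  have xc: "x \<in> carrier G" using x Lc by auto
  have "\<And>u v. u \<in> L \<Longrightarrow> v \<in> L \<Longrightarrow> u \<otimes> v = v \<otimes> u" using gen_commute[OF xc] e by auto
  thus False using L_nonab[of L] by auto
qed

lemma xpow:
  assumes x: "x \<in> L" "x \<notin> M"
  shows "x [^] p \<noteq> \<one>" "M \<subseteq> generate G {x [^] p}" "x [^] p \<in> L"
proof -
  have xc: "x \<in> carrier G" using x Lc by auto
  have Mx: "M \<subseteq> generate G {x}" using M_in_gen[OF x] .
  show np: "x [^] p \<noteq> \<one>"
  proof
    assume "x [^] p = \<one>"
    hence d: "ord x dvd p" using pow_ord_dvd[OF xc] by simp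
    hence "ord x = p" using p_dvd_ord[OF xc Mx] by (simp add: dvd_antisym)
    hence "card (generate G {x}) = card M" using ordc[OF xc] cardM by simp
    hence "generate G {x} = M" using card_subset_eq[OF finGen[OF xc] Mx] by simp
    thus False using x generate.incl[of x "{x}" G] by auto
  qed
  show xpL: "x [^] p \<in> L" using sub_nat_pow[OF sL x(1)] .
  show "M \<subseteq> generate G {x [^] p}" using beta[OF xpL np] .
qed


lemma b3:
  assumes x: "x \<in> L" "x \<notin> M" and ne: "generate G {x [^] p} \<noteq> M"
  shows "\<exists>E1 E2. good E1 E2"
proof -
  have xc: "x \<in> carrier G" using x Lc by auto
  let ?X = "generate G {x}"
  let ?Y = "generate G {x [^] p}"
  have sX: "subgroup ?X G" using gen_subgroup[OF xc] .
  have xX: "x \<in> ?X" using generate.incl[of x "{x}" G] by simp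
  have Mx: "M \<subseteq> ?X" using M_in_gen[OF x] .
  have pd: "p dvd ord x" using p_dvd_ord[OF xc Mx] .
  have op: "0 < ord x" using ord_pos[OF xc] .
  have XL: "?X \<subseteq> L" using gen_subL[OF x(1)] .
  have XneL: "?X \<noteq> L" using genx_neL[OF x(1)] .
  have x1: "x \<noteq> \<one>" using x oneM by auto
  have c1: "cnt ?X" using cnt_via_L[OF sX Mx XL XneL xX x1] .
  have nb1: "nb ?X" using nb_sub[OF XL XneL] xX x(2) by auto
  have xpc: "x [^] p \<in> carrier G" using xc by simp
  have sY: "subgroup ?Y G" using gen_subgroup[OF xpc] .
  have xpX: "x [^] p \<in> ?X" using sub_nat_pow[OF sX xX] .
  have YX: "?Y \<subseteq> ?X" using generate_subgroup_incl[OF _ sX, of "{x [^] p}"] xpX by auto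
  have xpY: "x [^] p \<in> ?Y" using generate.incl[of "x [^] p" "{x [^] p}" G] by simp
  have xp1: "x [^] p \<noteq> \<one>" using xpow[OF x] by simp
  have p0: "p \<noteq> 0" using p2 by simp
  have oxp: "ord (x [^] p) = ord x div p" using ord_pow[OF xc pd p0] .
  have lt: "ord x div p < ord x" using p2 op by simp
  have xnY: "x \<notin> ?Y"
  proof
    assume "x \<in> ?Y"
    hence "?X \<subseteq> ?Y" using generate_subgroup_incl[OF _ sY, of "{x}"] by auto
    hence "card ?X \<le> card ?Y" using card_mono[OF finGen[OF xpc]] by blast
    thus False using ordc[OF xc] ordc[OF xpc] oxp lt by simp
  qed
  have xN: "x \<in> normalizer G ?Y"
  proof (rule norm_by_commute[OF xc])
    show "?Y \<subseteq> carrier G" using gen_sub[OF xpc] .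
    fix h assume "h \<in> ?Y" thus "x \<otimes> h = h \<otimes> x" using gen_commute[OF xc xX] YX by auto
  qed
  have c2: "cnt ?Y" using cnt_intro[OF sY xpY xp1 xN xnY] .
  have nb2: "nb ?Y"
  proof (rule nb_sub)
    show "?Y \<subseteq> L" using YX XL by auto
    show "?Y \<noteq> L" using YX XL XneL by auto
    show "?Y \<noteq> M" using ne .
  qed
  have "subgroup_conj_class G ?X \<noteq> subgroup_conj_class G ?Y"
    using class_diff_card[OF _ gen_sub[OF xpc] gen_sub[OF xc]] ordc[OF xc] ordc[OF xpc] oxp lt by simp
  thus ?thesis unfolding good_def using c1 c2 nb1 nb2 by blast
qed

end

context group begin

lemma pow_commute_gen:
  assumes "x \<in> carrier G" "w \<in> carrier G" "w \<otimes> x = x \<otimes> w"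
  shows "w [^] (n::nat) \<otimes> x = x \<otimes> w [^] n"
proof -
  have "w [^] n \<in> generate G {w}"
    using subgroup_int_pow_closed[OF generate_is_subgroup[of "{w}"], of w "int n"] assms(2)
      generate.incl[of w "{w}" G] by (simp add: int_pow_int)
  moreover have "x \<otimes> w = w \<otimes> x" using assms(3) by simp
  ultimately show ?thesis using commute_gen[OF assms(1), of "{w}" "w [^] n"] assms(2) by auto
qed

lemma pow_central_aux:
  assumes u: "u \<in> carrier G" and v: "v \<in> carrier G" and w: "w \<in> carrier G"
    and vu: "v \<otimes> u = u \<otimes> v \<otimes> w" and wu: "w \<otimes> u = u \<otimes> w" and wv: "w \<otimes> v = v \<otimes> w"
  shows "v [^] (n::nat) \<otimes> u = u \<otimes> v [^] n \<otimes> w [^] n"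
proof (induct n)
  case 0 then show ?case using u by simp
next
  case (Suc n)
  have wn: "w [^] n \<otimes> v = v \<otimes> w [^] n" using pow_commute_gen[OF v w wv] .
  have "v [^] Suc n \<otimes> u = v [^] n \<otimes> (v \<otimes> u)" using u v by (simp add: m_assoc)
  also have "... = (v [^] n \<otimes> u) \<otimes> v \<otimes> w" using vu u v w by (simp add: m_assoc)
  also have "... = u \<otimes> v [^] n \<otimes> (w [^] n \<otimes> v) \<otimes> w" using Suc u v w by (simp add: m_assoc)
  also have "... = u \<otimes> v [^] n \<otimes> (v \<otimes> w [^] n) \<otimes> w" using wn by simp
  also have "... = u \<otimes> v [^] Suc n \<otimes> w [^] Suc n" using u v w by (simp add: m_assoc)
  finally show ?case .
qed

lemma pow_central:
  assumes u: "u \<in> carrier G" and v: "v \<in> carrier G" and w: "w \<in> carrier G"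
    and vu: "v \<otimes> u = u \<otimes> v \<otimes> w" and wu: "w \<otimes> u = u \<otimes> w" and wv: "w \<otimes> v = v \<otimes> w"
  shows "(u \<otimes> v) [^] (n::nat) = u [^] n \<otimes> v [^] n \<otimes> w [^] (\<Sum>i<n. i)"
proof (induct n)
  case 0 then show ?case by simp
next
  case (Suc n)
  let ?T = "\<Sum>i<n. i"
  have wTu: "w [^] ?T \<otimes> u = u \<otimes> w [^] ?T" using pow_commute_gen[OF u w wu] .
  have wTv: "w [^] ?T \<otimes> v = v \<otimes> w [^] ?T" using pow_commute_gen[OF v w wv] .
  have wnv: "w [^] n \<otimes> v = v \<otimes> w [^] n" using pow_commute_gen[OF v w wv] .
  have aux: "v [^] n \<otimes> u = u \<otimes> v [^] n \<otimes> w [^] n" using pow_central_aux[OF u v w vu wu wv] .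
  have "(u \<otimes> v) [^] Suc n = u [^] n \<otimes> v [^] n \<otimes> (w [^] ?T \<otimes> u) \<otimes> v" using Suc u v w by (simp add: m_assoc)
  also have "... = u [^] n \<otimes> (v [^] n \<otimes> u) \<otimes> w [^] ?T \<otimes> v" using wTu u v w by (simp add: m_assoc)
  also have "... = u [^] n \<otimes> u \<otimes> v [^] n \<otimes> w [^] n \<otimes> (w [^] ?T \<otimes> v)" using aux u v w by (simp add: m_assoc)
  also have "... = u [^] n \<otimes> u \<otimes> v [^] n \<otimes> (w [^] n \<otimes> v) \<otimes> w [^] ?T" using wTv u v w by (simp add: m_assoc)
  also have "... = u [^] n \<otimes> u \<otimes> v [^] n \<otimes> v \<otimes> (w [^] n \<otimes> w [^] ?T)" using wnv u v w by (simp add: m_assoc)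
  also have "... = u [^] Suc n \<otimes> v [^] Suc n \<otimes> w [^] (\<Sum>i<Suc n. i)"
    using u v w by (simp add: m_assoc nat_pow_mult add.commute)
  finally show ?case .
qed

end

lemma gauss2: fixes n :: nat shows "2 * (\<Sum>i<n. i) = n * (n - 1)"
proof (induct n)
  case 0 then show ?case by simp
next
  case (Suc n) then show ?case by (cases n) (auto simp: algebra_simps)
qed


context xs2 begin

lemma podd:
  assumes np2: "p \<noteq> 2" and allx: "\<And>x. x \<in> L \<Longrightarrow> x \<notin> M \<Longrightarrow> generate G {x [^] p} = M"
  shows False
proof -
  obtain a where a: "a \<in> L" "a \<notin> M" using M_L M_ne_L by auto
  have ac: "a \<in> carrier G" using a Lc by auto
  let ?A = "generate G {a}"
  have sA: "subgroup ?A G" using gen_subgroup[OF ac] .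
  obtain b where b: "b \<in> L" "b \<notin> ?A" using gen_subL[OF a(1)] genx_neL[OF a(1)] by auto
  have MA: "M \<subseteq> ?A" using M_in_gen[OF a] .
  have bM: "b \<notin> M" using b MA by auto
  have bc: "b \<in> carrier G" using b Lc by auto
  have apc: "a [^] p \<in> carrier G" using ac by simp
  have "b [^] p \<in> generate G {b [^] p}" using generate.incl[of "b [^] p" "{b [^] p}" G] by simp
  hence "b [^] p \<in> generate G {a [^] p}" using allx[OF b(1) bM] allx[OF a] by simp
  then obtain k::int where k: "b [^] p = (a [^] p) [^] k" using generate_pow[OF apc] by auto
  define u where "u = a [^] (- k)"
  have uc: "u \<in> carrier G" unfolding u_def using ac by simp
  have uL: "u \<in> L" unfolding u_def using subgroup_int_pow_closed[OF sL a(1)] .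
  have uA: "u \<in> ?A" unfolding u_def using subgroup_int_pow_closed[OF sA] generate.incl[of a "{a}" G] by simp
  define c where "c = u \<otimes> b"
  have cL: "c \<in> L" unfolding c_def using subgroup.m_closed[OF sL uL b(1)] .
  have cM: "c \<notin> M"
  proof
    assume "c \<in> M"
    hence "c \<in> ?A" using MA by auto
    hence "inv u \<otimes> c \<in> ?A" using subgroup.m_closed[OF sA subgroup.m_inv_closed[OF sA uA]] by blast
    moreover have "inv u \<otimes> c = b" unfolding c_def using uc bc by simp
    ultimately show False using b(2) by simp
  qed
  define w where "w = inv b \<otimes> inv u \<otimes> b \<otimes> u"
  have wM: "w \<in> M" using commL[of "inv b" "inv u"] subgroup.m_inv_closed[OF sL] b(1) uL bc uc
    unfolding w_def by simp
  have wc: "w \<in> carrier G" using wM Mc by auto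
  have vu: "b \<otimes> u = u \<otimes> b \<otimes> w" unfolding w_def using uc bc by (simp add: m_assoc)
  have wu: "w \<otimes> u = u \<otimes> w" using commute_cent[OF uL Lcent wM] .
  have wb: "w \<otimes> b = b \<otimes> w" using commute_cent[OF b(1) Lcent wM] .
  have form: "c [^] p = u [^] p \<otimes> b [^] p \<otimes> w [^] (\<Sum>i<p. i)"
    unfolding c_def using pow_central[OF uc bc wc vu wu wb] .
  have wp: "w [^] p = \<one>"
  proof -
    have "ord w dvd p" using sub_gen_dvd[OF yc] wM My unfolding p_def by simp
    thus ?thesis using pow_eq_id[OF wc] by simp
  qed
  have "\<not> 2 dvd p" using pP[of 2] np2 by auto
  then obtain q where q: "p = Suc (2 * q)" by (metis oddE Suc_eq_plus1 mult_2)
  have "2 * (\<Sum>i<p. i) = p * (p - 1)" using gauss2 .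
  hence S: "(\<Sum>i<p. i) = p * q" using q by simp
  have wS: "w [^] (\<Sum>i<p. i) = \<one>" unfolding S using nat_pow_pow[OF wc, of p q, symmetric] wp by simp
  have up: "u [^] p = a [^] (- k * int p)"
    unfolding u_def using int_pow_pow[OF ac, of "-k" "int p"] by (simp add: int_pow_int)
  have bp: "b [^] p = a [^] (int p * k)"
    using k int_pow_pow[OF ac, of "int p" k] by (simp add: int_pow_int)
  have "u [^] p \<otimes> b [^] p = a [^] (- k * int p) \<otimes> a [^] (int p * k)" using up bp by simp
  also have "... = a [^] (- k * int p + int p * k)" by (rule int_pow_mult[OF ac, symmetric])
  also have "... = \<one>" by (simp add: mult.commute)
  finally have "c [^] p = \<one>" using form wS uc bc by simp
  thus False using xpow(1)[OF cL cM] by simp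
qed

end


context xs begin

lemma phi_contra:
  assumes cen: "\<And>x m. x \<in> carrier G \<Longrightarrow> m \<in> M \<Longrightarrow> x \<otimes> m = m \<otimes> x"
    and sq: "\<And>l. l \<in> L \<Longrightarrow> l \<otimes> l \<in> M"
    and gc: "g \<in> carrier G" and ggL: "g \<otimes> g \<in> L" and Kg: "K = generate G (insert g L)"
  shows False
proof -
  define sg where "sg x = g \<otimes> x \<otimes> inv g" for x
  define ph where "ph x = g \<otimes> x \<otimes> inv g \<otimes> inv x" for x
  have sgL: "sg x \<in> L" if "x \<in> L" for x unfolding sg_def using conj_L[OF gc that] .
  have phL: "ph x \<in> L" if x: "x \<in> L" for x
  proof -
    have "sg x \<otimes> inv x \<in> L" using subgroup.m_closed[OF sL sgL[OF x] subgroup.m_inv_closed[OF sL x]] .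
    thus ?thesis unfolding ph_def sg_def .
  qed
  have Lcar: "x \<in> L \<Longrightarrow> x \<in> carrier G" for x using Lc by auto
  have Mcar: "x \<in> M \<Longrightarrow> x \<in> carrier G" for x using Mc by auto
  have phph: "ph (ph l) \<in> M" if l: "l \<in> L" for l
  proof -
    have lc: "l \<in> carrier G" using Lcar[OF l] .
    define s where "s = sg l"
    have sL': "s \<in> L" unfolding s_def using sgL[OF l] .
    have sc: "s \<in> carrier G" using Lcar[OF sL'] .
    define w1 where "w1 = (g \<otimes> g) \<otimes> l \<otimes> inv (g \<otimes> g) \<otimes> inv l"
    define w2 where "w2 = inv s \<otimes> l \<otimes> inv (inv s) \<otimes> inv l"
    have w1M: "w1 \<in> M" unfolding w1_def using commL[OF ggL l] .
    have w2M: "w2 \<in> M" unfolding w2_def using commL[OF subgroup.m_inv_closed[OF sL sL'] l] .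
    have w1c: "w1 \<in> carrier G" and w2c: "w2 \<in> carrier G" using w1M w2M Mcar by auto
    have e1: "ph (ph l) = (g \<otimes> s \<otimes> inv g) \<otimes> inv s \<otimes> l \<otimes> inv s"
      unfolding ph_def s_def sg_def using gc lc by (simp add: m_assoc inv_mult_group)
    have e2: "g \<otimes> s \<otimes> inv g = w1 \<otimes> l"
      unfolding w1_def s_def sg_def using gc lc by (simp add: m_assoc inv_mult_group)
    have e3: "inv s \<otimes> l = w2 \<otimes> l \<otimes> inv s"
      unfolding w2_def using sc lc by (simp add: m_assoc)
    have "ph (ph l) = w1 \<otimes> l \<otimes> (inv s \<otimes> l) \<otimes> inv s" using e1 e2 w1c lc sc by (simp add: m_assoc)
    also have "... = w1 \<otimes> (l \<otimes> w2) \<otimes> l \<otimes> inv s \<otimes> inv s" using e3 w1c w2c lc sc by (simp add: m_assoc)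
    also have "... = w1 \<otimes> w2 \<otimes> (l \<otimes> l) \<otimes> (inv s \<otimes> inv s)" using cen[OF lc w2M] w1c w2c lc sc by (simp add: m_assoc)
    finally have e: "ph (ph l) = w1 \<otimes> w2 \<otimes> (l \<otimes> l) \<otimes> (inv s \<otimes> inv s)" .
    have "inv (s \<otimes> s) \<in> M" using subgroup.m_inv_closed[OF sM sq[OF sL']] .
    hence i: "inv s \<otimes> inv s \<in> M" using sc by (simp add: inv_mult_group)
    have "w1 \<otimes> w2 \<in> M" using subgroup.m_closed[OF sM w1M w2M] .
    hence "w1 \<otimes> w2 \<otimes> (l \<otimes> l) \<in> M" using subgroup.m_closed[OF sM _ sq[OF l]] by blast
    hence "w1 \<otimes> w2 \<otimes> (l \<otimes> l) \<otimes> (inv s \<otimes> inv s) \<in> M" using subgroup.m_closed[OF sM _ i] by blast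
    thus ?thesis using e by simp
  qed
  have phM_sub: "ph m \<in> M" if m: "m \<in> M" for m
  proof -
    have "ph m = sg m \<otimes> inv m" unfolding ph_def sg_def ..
    moreover have "sg m \<in> M" unfolding sg_def using conj_M[OF gc m] .
    ultimately show ?thesis using subgroup.m_closed[OF sM _ subgroup.m_inv_closed[OF sM m]] by simp
  qed
  define S where "S = {x \<in> L. ph x \<in> M}"
  have MS: "M \<subseteq> S" unfolding S_def using M_L phM_sub by auto
  have sS: "subgroup S G"
  proof (rule subgroupI)
    show "S \<subseteq> carrier G" unfolding S_def using Lc by auto
    show "S \<noteq> {}" using MS oneM by auto
  next
    fix x assume x: "x \<in> S"
    have xL: "x \<in> L" and pxM: "ph x \<in> M" using x unfolding S_def by auto
    have xc: "x \<in> carrier G" using Lcar[OF xL] .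
    have sxc: "sg x \<in> carrier G" using Lcar[OF sgL[OF xL]] .
    have "inv (ph x) \<in> M" using subgroup.m_inv_closed[OF sM pxM] .
    hence "inv (sg x) \<otimes> inv (ph x) \<otimes> inv (inv (sg x)) \<in> M" using conj_M[of "inv (sg x)"] sxc by simp
    moreover have "inv (sg x) \<otimes> inv (ph x) \<otimes> inv (inv (sg x)) = ph (inv x)"
      unfolding ph_def sg_def using gc xc by (simp add: m_assoc inv_mult_group)
    ultimately have "ph (inv x) \<in> M" by simp
    thus "inv x \<in> S" unfolding S_def using subgroup.m_inv_closed[OF sL xL] by simp
  next
    fix x y assume x: "x \<in> S" and y: "y \<in> S"
    have xL: "x \<in> L" and pxM: "ph x \<in> M" using x unfolding S_def by auto
    have yL: "y \<in> L" and pyM: "ph y \<in> M" using y unfolding S_def by auto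
    have xc: "x \<in> carrier G" and yc: "y \<in> carrier G" using Lcar xL yL by auto
    have sxc: "sg x \<in> carrier G" using Lcar[OF sgL[OF xL]] .
    have pyc: "ph y \<in> carrier G" using Mcar[OF pyM] .
    have "ph (x \<otimes> y) = sg x \<otimes> ph y \<otimes> inv x" unfolding ph_def sg_def using gc xc yc
      by (simp add: m_assoc inv_mult_group)
    also have "... = ph y \<otimes> (sg x \<otimes> inv x)" using cen[OF sxc pyM] sxc pyc xc by (simp add: m_assoc)
    also have "... = ph y \<otimes> ph x" unfolding ph_def sg_def ..
    finally have "ph (x \<otimes> y) \<in> M" using subgroup.m_closed[OF sM pyM pxM] by simp
    thus "x \<otimes> y \<in> S" unfolding S_def using subgroup.m_closed[OF sL xL yL] by simp
  qed
  have conjS: "l \<otimes> s \<otimes> inv l \<in> S" if l: "l \<in> L" and s: "s \<in> S" for l s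
  proof -
    have sL': "s \<in> L" and psM: "ph s \<in> M" using s unfolding S_def by auto
    have lc: "l \<in> carrier G" and sc: "s \<in> carrier G" using Lcar l sL' by auto
    have slc: "sg l \<in> carrier G" using Lcar[OF sgL[OF l]] .
    have psc: "ph s \<in> carrier G" using Mcar[OF psM] .
    define c1 where "c1 = sg l \<otimes> s \<otimes> inv (sg l) \<otimes> inv s"
    define c2 where "c2 = l \<otimes> inv s \<otimes> inv l \<otimes> inv (inv s)"
    have c1M: "c1 \<in> M" unfolding c1_def using commL[OF sgL[OF l] sL'] .
    have c2M: "c2 \<in> M" unfolding c2_def using commL[OF l subgroup.m_inv_closed[OF sL sL']] .
    have c1c: "c1 \<in> carrier G" and c2c: "c2 \<in> carrier G" using c1M c2M Mcar by auto
    have e0: "ph (l \<otimes> s \<otimes> inv l) = sg l \<otimes> (ph s \<otimes> s) \<otimes> inv (sg l) \<otimes> (l \<otimes> inv s \<otimes> inv l)"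
      unfolding ph_def sg_def using gc lc sc by (simp add: m_assoc inv_mult_group)
    have e1: "sg l \<otimes> (ph s \<otimes> s) \<otimes> inv (sg l) = ph s \<otimes> (c1 \<otimes> s)"
    proof -
      have "sg l \<otimes> (ph s \<otimes> s) \<otimes> inv (sg l) = (sg l \<otimes> ph s) \<otimes> s \<otimes> inv (sg l)" using slc psc sc by (simp add: m_assoc)
      also have "... = ph s \<otimes> (sg l \<otimes> s \<otimes> inv (sg l))" using cen[OF slc psM] slc psc sc by (simp add: m_assoc)
      also have "sg l \<otimes> s \<otimes> inv (sg l) = c1 \<otimes> s" unfolding c1_def using slc sc by (simp add: m_assoc)
      finally show ?thesis .
    qed
    have e2: "l \<otimes> inv s \<otimes> inv l = c2 \<otimes> inv s" unfolding c2_def using lc sc by (simp add: m_assoc)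
    have "ph (l \<otimes> s \<otimes> inv l) = ph s \<otimes> (c1 \<otimes> s) \<otimes> (c2 \<otimes> inv s)" using e0 e1 e2 by simp
    also have "... = ph s \<otimes> c1 \<otimes> (s \<otimes> c2) \<otimes> inv s" using psc c1c c2c sc by (simp add: m_assoc)
    also have "... = ph s \<otimes> c1 \<otimes> c2" using cen[OF sc c2M] psc c1c c2c sc by (simp add: m_assoc)
    finally have "ph (l \<otimes> s \<otimes> inv l) \<in> M"
      using subgroup.m_closed[OF sM subgroup.m_closed[OF sM psM c1M] c2M] by simp
    moreover have "l \<otimes> s \<otimes> inv l \<in> L" using conj_L[OF lc sL'] .
    ultimately show ?thesis unfolding S_def by simp
  qed
  have insc: "insert g L \<subseteq> carrier G" using gc Lc by auto
  have "derived G (generate G (insert g L)) \<subseteq> S"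
  proof (rule derived_gen_sub[OF insc sS])
    fix x s assume x: "x \<in> insert g L" and s: "s \<in> S"
    have sL': "s \<in> L" and psM: "ph s \<in> M" using s unfolding S_def by auto
    have sc: "s \<in> carrier G" using Lcar[OF sL'] .
    show "x \<otimes> s \<otimes> inv x \<in> S \<and> inv x \<otimes> s \<otimes> x \<in> S"
    proof (cases "x = g")
      case True
      have a1: "ph (g \<otimes> s \<otimes> inv g) = g \<otimes> ph s \<otimes> inv g" unfolding ph_def using gc sc by (simp add: m_assoc inv_mult_group)
      have a2: "ph (inv g \<otimes> s \<otimes> g) = inv g \<otimes> ph s \<otimes> inv (inv g)" unfolding ph_def using gc sc by (simp add: m_assoc inv_mult_group)
      have b1: "g \<otimes> s \<otimes> inv g \<in> L" using conj_L[OF gc sL'] .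
      have b2: "inv g \<otimes> s \<otimes> g \<in> L" using conj_L[of "inv g" s] gc sL' by simp
      have "g \<otimes> ph s \<otimes> inv g \<in> M" using conj_M[OF gc psM] .
      moreover have "inv g \<otimes> ph s \<otimes> inv (inv g) \<in> M" using conj_M[of "inv g"] gc psM by simp
      ultimately show ?thesis using True a1 a2 b1 b2 unfolding S_def by simp
    next
      case False
      hence xL: "x \<in> L" using x by auto
      have "inv x \<otimes> s \<otimes> inv (inv x) \<in> S" using conjS[OF subgroup.m_inv_closed[OF sL xL] s] .
      thus ?thesis using conjS[OF xL s] Lcar[OF xL] by simp
    qed
  next
    fix x y assume x: "x \<in> insert g L" and y: "y \<in> insert g L"
    show "x \<otimes> y \<otimes> inv x \<otimes> inv y \<in> S"
    proof (cases "x = g")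
      case True note xg = this
      show ?thesis
      proof (cases "y = g")
        case True thus ?thesis using xg gc subgroup.one_closed[OF sS] by (simp add: m_assoc)
      next
        case False
        hence yL: "y \<in> L" using y by auto
        have "ph y \<in> S" unfolding S_def using phL[OF yL] phph[OF yL] by simp
        thus ?thesis using xg unfolding ph_def by simp
      qed
    next
      case False
      hence xL: "x \<in> L" using x by auto
      have xc: "x \<in> carrier G" using Lcar[OF xL] .
      show ?thesis
      proof (cases "y = g")
        case True
        have "ph x \<in> S" unfolding S_def using phL[OF xL] phph[OF xL] by simp
        hence "inv (ph x) \<in> S" using subgroup.m_inv_closed[OF sS] by blast
        moreover have "inv (ph x) = x \<otimes> y \<otimes> inv x \<otimes> inv y" unfolding ph_def using True gc xc
          by (simp add: m_assoc inv_mult_group)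
        ultimately show ?thesis by simp
      next
        case False
        hence yL: "y \<in> L" using y by auto
        show ?thesis using commL[OF xL yL] MS by auto
      qed
    qed
  qed
  hence LS: "L \<subseteq> S" using Kg dK by simp
  have "derived G (generate G (insert g L)) \<subseteq> M"
  proof (rule derived_gen_sub[OF insc sM])
    fix x s assume x: "x \<in> insert g L" and s: "s \<in> M"
    have xc: "x \<in> carrier G" using x insc by auto
    show "x \<otimes> s \<otimes> inv x \<in> M \<and> inv x \<otimes> s \<otimes> x \<in> M"
      using conj_M[OF xc s] conj_M[of "inv x" s] xc s by simp
  next
    fix x y assume x: "x \<in> insert g L" and y: "y \<in> insert g L"
    show "x \<otimes> y \<otimes> inv x \<otimes> inv y \<in> M"
    proof (cases "x = g")
      case True note xg = this
      show ?thesis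
      proof (cases "y = g")
        case True thus ?thesis using xg gc oneM by (simp add: m_assoc)
      next
        case False
        hence yL: "y \<in> L" using y by auto
        have "ph y \<in> M" using LS yL unfolding S_def by auto
        thus ?thesis using xg unfolding ph_def by simp
      qed
    next
      case False
      hence xL: "x \<in> L" using x by auto
      have xc: "x \<in> carrier G" using Lcar[OF xL] .
      show ?thesis
      proof (cases "y = g")
        case True
        have "ph x \<in> M" using LS xL unfolding S_def by auto
        hence "inv (ph x) \<in> M" using subgroup.m_inv_closed[OF sM] by blast
        moreover have "inv (ph x) = x \<otimes> y \<otimes> inv x \<otimes> inv y" unfolding ph_def using True gc xc
          by (simp add: m_assoc inv_mult_group)
        ultimately show ?thesis by simp
      next
        case False
        hence yL: "y \<in> L" using y by auto
        show ?thesis using commL[OF xL yL] by auto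
      qed
    qed
  qed
  hence "L \<subseteq> M" using Kg dK by simp
  thus False using M_L M_ne_L by auto
qed

end

context group begin
lemma pow2: "x \<in> carrier G \<Longrightarrow> x [^] (2::nat) = x \<otimes> x"
  by (simp add: numeral_2_eq_2)
end

context xs2 begin

lemma E1_part:
  assumes a: "a \<in> L" "a \<notin> M"
  shows "cnt (generate G {a})" "nb (generate G {a})" "M \<subseteq> generate G {a}" "generate G {a} \<subseteq> L"
proof -
  have ac: "a \<in> carrier G" using a Lc by auto
  have sX: "subgroup (generate G {a}) G" using gen_subgroup[OF ac] .
  have xX: "a \<in> generate G {a}" using generate.incl[of a "{a}" G] by simp
  show Mx: "M \<subseteq> generate G {a}" using M_in_gen[OF a] .
  show XL: "generate G {a} \<subseteq> L" using gen_subL[OF a(1)] .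
  have XneL: "generate G {a} \<noteq> L" using genx_neL[OF a(1)] .
  have x1: "a \<noteq> \<one>" using a oneM by auto
  show "cnt (generate G {a})" using cnt_via_L[OF sX Mx XL XneL xX x1] .
  show "nb (generate G {a})" using nb_sub[OF XL XneL] xX a(2) by auto
qed

lemma p2case:
  assumes pe: "p = 2" and allx: "\<And>x. x \<in> L \<Longrightarrow> x \<notin> M \<Longrightarrow> generate G {x [^] p} = M"
  shows "\<exists>E1 E2. good E1 E2"
proof -
  have y1: "y \<noteq> \<one>"
  proof
    assume "y = \<one>" hence "M = {\<one>}" using My generate_one by simp
    thus False using Mne by simp
  qed
  have Mset: "M = {\<one>, y}"
  proof -
    have sub: "{\<one>, y} \<subseteq> M" using oneM yM by auto
    have "card {\<one>, y} = card M" using y1 cardM pe by simp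
    thus ?thesis using card_subset_eq[OF finM sub] by simp
  qed
  have cen: "x \<otimes> m = m \<otimes> x" if x: "x \<in> carrier G" and m: "m \<in> M" for x m
  proof (cases "m = \<one>")
    case True thus ?thesis using x by simp
  next
    case False
    hence my: "m = y" using m Mset by auto
    have "x \<otimes> y \<otimes> inv x \<in> M" using conj_M[OF x yM] .
    moreover have "x \<otimes> y \<otimes> inv x \<noteq> \<one>"
    proof
      assume "x \<otimes> y \<otimes> inv x = \<one>"
      hence "inv x \<otimes> (x \<otimes> y \<otimes> inv x) \<otimes> x = inv x \<otimes> \<one> \<otimes> x" by simp
      hence "y = \<one>" using x yc by (simp add: m_assoc)
      thus False using y1 by simp
    qed
    ultimately have "x \<otimes> y \<otimes> inv x = y" using Mset by auto
    hence "x \<otimes> y \<otimes> inv x \<otimes> x = y \<otimes> x" by simp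
    thus ?thesis using my x yc by (simp add: m_assoc)
  qed
  have sq: "l \<otimes> l \<in> M" if l: "l \<in> L" for l
  proof (cases "l \<in> M")
    case True thus ?thesis using subgroup.m_closed[OF sM] by blast
  next
    case False
    have lc: "l \<in> carrier G" using l Lc by auto
    have "l [^] p \<in> generate G {l [^] p}" using generate.incl[of "l [^] p" "{l [^] p}" G] by simp
    hence "l [^] p \<in> M" using allx[OF l False] by simp
    thus ?thesis using pow2[OF lc] pe by simp
  qed
  obtain a where a: "a \<in> L" "a \<notin> M" using M_L M_ne_L by auto
  note E1 = E1_part[OF a]
  have ac: "a \<in> carrier G" using a Lc by auto
  let ?E1 = "generate G {a}"
  show ?thesis
  proof (cases "\<exists>g\<in>carrier G. g \<noteq> \<one> \<and> \<not> M \<subseteq> generate G {g}")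
    case True
    then obtain g where g: "g \<in> carrier G" "g \<noteq> \<one>" "\<not> M \<subseteq> generate G {g}" by blast
    let ?E2 = "generate G {g}"
    have sE2: "subgroup ?E2 G" using gen_subgroup[OF g(1)] .
    have gE2: "g \<in> ?E2" using generate.incl[of g "{g}" G] by simp
    obtain m where m: "m \<in> M" "m \<notin> ?E2" using g(3) by auto
    have mc: "m \<in> carrier G" using m Mc by auto
    have mN: "m \<in> normalizer G ?E2"
    proof (rule norm_by_commute[OF mc gen_sub[OF g(1)]])
      fix h assume "h \<in> ?E2"
      hence hc: "h \<in> carrier G" using gen_sub[OF g(1)] by auto
      show "m \<otimes> h = h \<otimes> m" using cen[OF hc m(1)] by simp
    qed
    have c2: "cnt ?E2" using cnt_intro[OF sE2 gE2 g(2) mN m(2)] .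
    have nb2: "nb ?E2" using nb_M g(3) by simp
    have "subgroup_conj_class G ?E1 \<noteq> subgroup_conj_class G ?E2"
      using class_diff_sup[OF nM E1(3) g(3) gen_sub[OF g(1)] gen_sub[OF ac]] .
    thus ?thesis unfolding good_def using E1(1,2) c2 nb2 by blast
  next
    case False
    hence gam: "\<And>g. g \<in> carrier G \<Longrightarrow> g \<noteq> \<one> \<Longrightarrow> M \<subseteq> generate G {g}" by blast
    obtain g where g: "g \<in> K" "g \<notin> L" using L_K L_ne_K by auto
    have gc: "g \<in> carrier G" using g Kc by auto
    have g1: "g \<noteq> \<one>" using g subgroup.one_closed[OF sL] by auto
    let ?H = "generate G (insert g L)"
    have insc: "insert g L \<subseteq> carrier G" using gc Lc by auto
    have sH: "subgroup ?H G" using generate_is_subgroup[OF insc] .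
    have gH: "g \<in> ?H" using generate.incl[of g "insert g L" G] by simp
    have LH: "L \<subseteq> ?H" using generate.incl[of _ "insert g L" G] by blast
    have HK: "?H \<subseteq> K" using generate_subgroup_incl[OF _ sK, of "insert g L"] g(1) L_K by auto
    show ?thesis
    proof (cases "?H = K")
      case False
      have "K \<subseteq> normalizer G ?H" using norm_der[OF sK sH] dK LH HK by simp
      moreover obtain k where "k \<in> K" "k \<notin> ?H" using HK False by auto
      ultimately have c2: "cnt ?H" using cnt_intro[OF sH gH g1] by blast
      have nb2: "nb ?H" unfolding nb_def using gH g M_L HK False by auto
      have "subgroup_conj_class G ?E1 \<noteq> subgroup_conj_class G ?H"
        using class_diff_sub[OF nL E1(4)] gH g(2) subgroup.subset[OF sH] by blast
      thus ?thesis unfolding good_def using E1(1,2) c2 nb2 by blast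
    next
      case True note HeqK = this
      show ?thesis
      proof (cases "g \<otimes> g \<in> L")
        case True
        have False using phi_contra[OF cen sq gc True HeqK[symmetric]] .
        thus ?thesis ..
      next
        case False
        define gg where "gg = g [^] (2::nat)"
        have gge: "gg = g \<otimes> g" unfolding gg_def using pow2[OF gc] .
        have ggc: "gg \<in> carrier G" using gge gc by simp
        have ggL: "gg \<notin> L" using gge False by simp
        let ?E2 = "generate G {gg}"
        have sE2: "subgroup ?E2 G" using gen_subgroup[OF ggc] .
        have ggE2: "gg \<in> ?E2" using generate.incl[of gg "{gg}" G] by simp
        have gg1: "gg \<noteq> \<one>" using ggL subgroup.one_closed[OF sL] by auto
        have gX: "g \<in> generate G {g}" using generate.incl[of g "{g}" G] by simp
        have ggX: "gg \<in> generate G {g}" unfolding gg_def using sub_nat_pow[OF gen_subgroup[OF gc] gX] .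
        have E2X: "?E2 \<subseteq> generate G {g}" using generate_subgroup_incl[OF _ gen_subgroup[OF gc], of "{gg}"] ggX by auto
        have d2: "2 dvd ord g" using p_dvd_ord[OF gc gam[OF gc g1]] pe by simp
        have og: "0 < ord g" using ord_pos[OF gc] .
        have ogg: "ord gg = ord g div 2" unfolding gg_def using ord_pow[OF gc d2] by simp
        have gnE2: "g \<notin> ?E2"
        proof
          assume "g \<in> ?E2"
          hence "generate G {g} \<subseteq> ?E2" using generate_subgroup_incl[OF _ sE2, of "{g}"] by auto
          hence "card (generate G {g}) \<le> card ?E2" using card_mono[OF finGen[OF ggc]] by blast
          thus False using ordc[OF gc] ordc[OF ggc] ogg og by simp
        qed
        have gN: "g \<in> normalizer G ?E2"
        proof (rule norm_by_commute[OF gc gen_sub[OF ggc]])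
          fix h assume "h \<in> ?E2" thus "g \<otimes> h = h \<otimes> g" using gen_commute[OF gc gX] E2X by auto
        qed
        have c2: "cnt ?E2" using cnt_intro[OF sE2 ggE2 gg1 gN gnE2] .
        have nKE: "\<not> K \<subseteq> ?E2"
        proof
          assume "K \<subseteq> ?E2"
          hence "L \<subseteq> ?E2" using L_K by auto
          thus False using L_nonab[of ?E2] gen_commute[OF ggc] by auto
        qed
        have nb2: "nb ?E2" unfolding nb_def using ggE2 ggL M_L nKE by auto
        have "subgroup_conj_class G ?E1 \<noteq> subgroup_conj_class G ?E2"
          using class_diff_sub[OF nL E1(4)] ggE2 ggL gen_sub[OF ggc] by blast
        thus ?thesis unfolding good_def using E1(1,2) c2 nb2 by blast
      qed
    qed
  qed
qed

lemma caseII_main: "\<exists>E1 E2. good E1 E2"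
proof (cases "\<exists>x. x \<in> L \<and> x \<notin> M \<and> generate G {x [^] p} \<noteq> M")
  case True thus ?thesis using b3 by blast
next
  case False
  hence allx: "\<And>x. x \<in> L \<Longrightarrow> x \<notin> M \<Longrightarrow> generate G {x [^] p} = M" by blast
  show ?thesis
  proof (cases "p = 2")
    case True thus ?thesis using p2case allx by blast
  next
    case False thus ?thesis using podd allx by blast
  qed
qed

end

context xs begin

theorem xs_main: "\<exists>E1 E2. good E1 E2"
proof (cases "\<exists>y\<in>M. M = generate G {y}")
  case False thus ?thesis using caseI by blast
next
  case True
  then obtain y where y: "y \<in> M" "M = generate G {y}" by blast
  have Lce: "L \<subseteq> cent M" using cyc_cent[OF y] .
  show ?thesis
  proof (cases "\<exists>c\<in>L. c \<noteq> \<one> \<and> \<not> M \<subseteq> generate G {c}")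
    case True thus ?thesis using alpha[OF Lce] by blast
  next
    case False
    hence beta: "\<And>c. c \<in> L \<Longrightarrow> c \<noteq> \<one> \<Longrightarrow> M \<subseteq> generate G {c}" by blast
    interpret xs2 G M L K y
      by (unfold_locales) (use y beta in auto)
    show ?thesis using caseII_main .
  qed
qed

end

definition dser :: "('a, 'b) monoid_scheme \<Rightarrow> nat \<Rightarrow> 'a set" where
  "dser G i = (derived G ^^ i) (carrier G)"

context group begin

abbreviation ds where "ds \<equiv> dser G"

lemma ds_0: "ds 0 = carrier G" by (simp add: dser_def)
lemma ds_Suc: "ds (Suc i) = derived G (ds i)" by (simp add: dser_def)

lemma ds_normal: "ds i \<lhd> G"
  by (induct i) (auto simp: normal_self derived_is_normal ds_0 ds_Suc)

lemma ds_subgroup: "subgroup (ds i) G"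
  using ds_normal normal_imp_subgroup by blast

lemma ds_Suc_sub: "ds (Suc i) \<subseteq> ds i"
  using derived_incl[OF subset_refl ds_subgroup] by (simp add: ds_Suc)

lemma ds_anti: "i \<le> j \<Longrightarrow> ds j \<subseteq> ds i"
proof (induct j rule: dec_induct)
  case base then show ?case by simp
next
  case (step j) then show ?case using ds_Suc_sub[of j] by blast
qed

lemma ds_const: assumes "ds (Suc i) = ds i" "i \<le> j" shows "ds j = ds i"
  using assms(2)
proof (induct j rule: dec_induct)
  case base then show ?case by simp
next
  case (step j) then show ?case using assms(1) by (simp add: ds_Suc)
qed

lemma extras:
  assumes fin: "finite (carrier G)"
    and nM: "M \<lhd> G" and nL: "L \<lhd> G" and nK: "K \<lhd> G"
    and dM: "derived G M = {\<one>}" and dL: "derived G L = M" and dK: "derived G K = L"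
    and Mne: "M \<noteq> {\<one>}" and LG': "L \<subseteq> derived G (carrier G)" and LG: "L \<noteq> carrier G"
  shows "\<exists>E1 E2. cnt E1 \<and> cnt E2 \<and> \<not> (E1 = M \<or> E1 = L \<or> K \<subseteq> E1)
     \<and> \<not> (E2 = M \<or> E2 = L \<or> K \<subseteq> E2)
     \<and> subgroup_conj_class G E1 \<noteq> subgroup_conj_class G E2"
proof -
  interpret xs G M L K by (intro xs.intro[OF is_group] xs_axioms.intro) (rule assms)+
  show ?thesis using xs_main unfolding good_def nb_def by blast
qed

end

theorem mainTheorem17:
  fixes G :: "('a, 'b) monoid_scheme" and n :: nat
  assumes "group G" and "finite (carrier G)" and "solvable G"
    and "D_count G = n" and "n \<ge> 3"
  shows "derived_length G \<le> n - 1"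
proof -
  interpret group G by fact
  define d where "d = derived_length G"
  have ex: "\<exists>k. (derived G ^^ k) (carrier G) = {\<one>\<^bsub>G\<^esub>}"
    using assms(3) solvable_iff_trivial_derived_seq by simp
  have hd: "dser G d = {\<one>\<^bsub>G\<^esub>}" unfolding d_def derived_length_def dser_def by (rule LeastI_ex[OF ex])
  have hlt: "\<And>i. i < d \<Longrightarrow> dser G i \<noteq> {\<one>\<^bsub>G\<^esub>}"
  proof -
    fix i assume "i < d"
    thus "dser G i \<noteq> {\<one>\<^bsub>G\<^esub>}" unfolding d_def derived_length_def dser_def by (rule not_less_Least)
  qed
  have strict: "\<And>i. i < d \<Longrightarrow> dser G (Suc i) \<noteq> dser G i"
  proof -
    fix i assume i: "i < d"
    show "dser G (Suc i) \<noteq> dser G i"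
    proof
      assume e: "dser G (Suc i) = dser G i"
      have "dser G d = dser G i" using ds_const[OF e, of d] i by simp
      thus False using hd hlt[OF i] by simp
    qed
  qed
  have sless: "\<And>i j. i < j \<Longrightarrow> j \<le> d \<Longrightarrow> dser G j \<subset> dser G i"
  proof -
    fix i j assume ij: "i < j" "j \<le> d"
    have "dser G j \<subseteq> dser G (Suc i)" using ds_anti ij by auto
    moreover have "dser G (Suc i) \<subset> dser G i" using ds_Suc_sub strict ij by auto
    ultimately show "dser G j \<subset> dser G i" by blast
  qed
  show ?thesis
  proof (cases "d \<le> 2")
    case True thus ?thesis using assms d_def by simp
  next
    case False
    hence d3: "d \<ge> 3" by simp
    define M where "M = dser G (d - 1)"
    define L where "L = dser G (d - 2)"
    define K where "K = dser G (d - 3)"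
    have eM: "dser G (Suc (d-1)) = dser G d" using d3 by (simp add: Suc_diff_Suc)
    have eL: "Suc (d - 2) = d - 1" using d3 by simp
    have eK: "Suc (d - 3) = d - 2" using d3 by simp
    have dM: "derived G M = {\<one>\<^bsub>G\<^esub>}" using eM hd unfolding M_def by (simp add: ds_Suc)
    have dL: "derived G L = M" unfolding M_def L_def using arg_cong[where f="dser G", OF eL] by (simp add: ds_Suc)
    have dK: "derived G K = L" unfolding K_def L_def using arg_cong[where f="dser G", OF eK] by (simp add: ds_Suc)
    have nM: "M \<lhd> G" unfolding M_def by (rule ds_normal)
    have nL: "L \<lhd> G" unfolding L_def by (rule ds_normal)
    have nK: "K \<lhd> G" unfolding K_def by (rule ds_normal)
    have Mne: "M \<noteq> {\<one>\<^bsub>G\<^esub>}" unfolding M_def using hlt d3 by simp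
    have LG': "L \<subseteq> derived G (carrier G)" unfolding L_def using ds_anti[of 1 "d-2"] d3 by (simp add: ds_Suc ds_0)
    have LG: "L \<noteq> carrier G"
    proof -
      have "dser G 1 \<subset> dser G 0" using sless[of 0 1] d3 by simp
      thus ?thesis using LG' by (auto simp: ds_Suc ds_0)
    qed
    obtain E1 E2 where E: "cnt E1" "cnt E2" "\<not> (E1 = M \<or> E1 = L \<or> K \<subseteq> E1)"
      "\<not> (E2 = M \<or> E2 = L \<or> K \<subseteq> E2)" "subgroup_conj_class G E1 \<noteq> subgroup_conj_class G E2"
      using extras[OF assms(2) nM nL nK dM dL dK Mne LG' LG] by blast
    let ?S = "dser G ` {1..<d}"
    have inj: "inj_on (dser G) {1..<d}"
    proof (rule inj_onI)
      fix i j assume "i \<in> {1..<d}" "j \<in> {1..<d}" "dser G i = dser G j"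
      note ij = this
      show "i = j"
      proof (rule ccontr)
        assume "i \<noteq> j"
        hence "i < j \<or> j < i" by auto
        thus False using sless[of i j] sless[of j i] ij by auto
      qed
    qed
    have cardS: "card ?S = d - 1" using card_image[OF inj] by simp
    have cntS: "\<And>H. H \<in> ?S \<Longrightarrow> cnt H \<and> H \<lhd> G"
    proof -
      fix H assume "H \<in> ?S"
      then obtain i where i: "i \<in> {1..<d}" "H = dser G i" by blast
      have nH: "H \<lhd> G" using i ds_normal by simp
      have "normalizer G H = carrier G"
      proof
        show "normalizer G H \<subseteq> carrier G" unfolding normalizer_def stabilizer_def by auto
        show "carrier G \<subseteq> normalizer G H"
        proof
          fix g assume g: "g \<in> carrier G"
          have "H \<subseteq> carrier G" using nH normal_imp_subgroup subgroup.subset by blast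
          thus "g \<in> normalizer G H" using normalizer_iff normal_conj_eq[OF nH g] g by simp
        qed
      qed
      moreover have "H \<noteq> carrier G" using sless[of 0 i] i by (auto simp: ds_0)
      moreover have "H \<noteq> {\<one>\<^bsub>G\<^esub>}" using hlt i by auto
      ultimately show "cnt H \<and> H \<lhd> G" unfolding cnt_def using nH normal_imp_subgroup by auto
    qed
    have bad: "\<And>H. H \<in> ?S \<Longrightarrow> H = M \<or> H = L \<or> K \<subseteq> H"
    proof -
      fix H assume "H \<in> ?S"
      then obtain i where i: "i \<in> {1..<d}" "H = dser G i" by blast
      show "H = M \<or> H = L \<or> K \<subseteq> H"
      proof (cases "i \<le> d - 3")
        case True
        have "K \<subseteq> H" using ds_anti[of i "d-3"] True i unfolding K_def by simp
        thus ?thesis by simp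
      next
        case False
        hence "i = d - 1 \<or> i = d - 2" using i by auto
        thus ?thesis unfolding M_def L_def using i by auto
      qed
    qed
    have "card ?S + 2 \<le> D_count G"
      by (rule count_lemma[OF assms(2) cntS _ E(1) E(2) _ _ E(5)]) (use E(3,4) bad in auto)
    thus ?thesis using cardS assms(4) d3 d_def by simp
  qed
qed

end
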